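(* Let $\mathcal G$ be a discrete groupoid (with quasi-invariant measure of full support) and $T:C_r^*(\mathcal G)\to C_r^*(\mathcal G)$ a bounded $C_0(X)$-linear operator. Define $\varphi_T(\gamma)=E(\lambda_{\gamma^{-1}}*T\lambda_\gamma)(d(\gamma))$ for $\gamma\in\mathcal G$. Then: (i) $\varphi_T\in C_b(\mathcal G)$ and $\|\varphi_T\|_\infty\le\|T\|$; (ii) if $T$ has finite $C_0(X)$-rank and takes values in $\mathrm{span}\{\lambda_\gamma:\gamma\in\mathcal G\}$, then $\varphi_T\in C_c(\mathcal G)$ and $\|\varphi_T\|_{M_0A(\mathcal G)}\le\|T\|_{cb}$.
   Context: A discrete groupoid is a countable groupoid with discrete topology, unit space $X=\mathcal G^{(0)}$, source $d$, range $r$. $C_c(\mathcal G)$ has convolution $f*g(\gamma)=\sum_{\beta\in\mathcal G_{d(\gamma)}}f(\gamma\beta^{-1})g(\beta)$ and involution $f^*(\gamma)=\overline{f(\gamma^{-1})}$; $\lambda_\gamma$ denotes the point mass $\delta_\gamma\in C_c(\mathcal G)$ viewed in $C_r^*(\mathcal G)$, the reduced groupoid $C^*$-algebra. $C_0(X)$ acts on the right by $f*a(\gamma)=f(\gamma)a(d(\gamma))$. $E:C_r^*(\mathcal G)\to C_0(X)$ is the conditional expectation extending restriction $C_c(\mathcal G)\to C_c(X)$, and $\langle f,g\rangle=E(f^**g)$ is the $C_0(X)$-valued inner product. An operator has $C_0(X)$-rank one if it is of the form $\Theta_{h,g}(f)=h*\langle g,f\rangle$ for some $g,h\in C_r^*(\mathcal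 G)$; finite $C_0(X)$-rank means a finite sum of such. $M_0A(\mathcal G)$ is the space of $\varphi\in L^\infty(\mathcal G)$ such that pointwise multiplication $M_\varphi:A(\mathcal G)\to A(\mathcal G)$ is completely bounded, with $\|\varphi\|_{M_0A(\mathcal G)}=\|M_\varphi\|_{cb}$, where $A(\mathcal G)$ is Renault's Fourier algebra of $\mathcal G$ (closure in the Fourier–Stieltjes algebra $B(\mathcal G)$ of coefficients of the left regular representation); equivalently, for continuous bounded $\varphi$, this equals the cb norm of pointwise multiplication $m_\varphi$ on $C_r^*(\mathcal G)$. *)

theory Defs
  imports "HOL-Analysis.Analysis"
begin

definition discrete_groupoid ::
  "'g set \<Rightarrow> 'g set \<Rightarrow> ('g \<Rightarrow> 'g) \<Rightarrow> ('g \<Rightarrow> 'g) \<Rightarrow> ('g \<Rightarrow> 'g \<Rightarrow> 'g) \<Rightarrow> ('g \<Rightarrow> 'g) \<Rightarrow> bool" where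
  "discrete_groupoid Gr X d r m i \<longleftrightarrow>
     countable Gr \<and> X \<subseteq> Gr \<and>
     (\<forall>a\<in>Gr. d a \<in> X \<and> r a \<in> X) \<and>
     (\<forall>x\<in>X. d x = x \<and> r x = x) \<and>
     (\<forall>a\<in>Gr. \<forall>b\<in>Gr. d a = r b \<longrightarrow> m a b \<in> Gr \<and> d (m a b) = d b \<and> r (m a b) = r a) \<and>
     (\<forall>a\<in>Gr. \<forall>b\<in>Gr. \<forall>c\<in>Gr. d a = r b \<and> d b = r c \<longrightarrow> m (m a b) c = m a (m b c)) \<and>
     (\<forall>a\<in>Gr. m (r a) a = a \<and> m a (d a) = a) \<and>
     (\<forall>a\<in>Gr. i a \<in> Gr \<and> d (i a) = r a \<and> r (i a) = d a \<and> m a (i a) = r a \<and> m (i a) a = d a)"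

text \<open>Elements of C*_r(G) are represented by their (faithful) coefficient functions
  G \<rightarrow> complex.  Norm of an n x n matrix over C*_r(G): supremum over units x of the operator
  norm of the matrix [lambda_x(A i j)] on l2(G_x)^n, computed on finitely supported vectors.\<close>

definition matNorm ::
  "'g set \<Rightarrow> 'g set \<Rightarrow> ('g \<Rightarrow> 'g) \<Rightarrow> ('g \<Rightarrow> 'g \<Rightarrow> 'g) \<Rightarrow> ('g \<Rightarrow> 'g)
   \<Rightarrow> nat \<Rightarrow> (nat \<Rightarrow> nat \<Rightarrow> 'g \<Rightarrow> complex) \<Rightarrow> ereal" where
  "matNorm Gr X d m i n A = Sup {ereal (cmod (\<Sum>k<n. \<Sum>j<n. \<Sum>\<gamma>\<in>F. \<Sum>\<beta>\<in>F.
          cnj (\<eta> k \<gamma>) * A k j (m \<gamma> (i \<beta>)) * \<xi> j \<beta>)) | x F \<xi> \<eta>.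
        x \<in> X \<and> finite F \<and> F \<subseteq> {\<gamma>\<in>Gr. d \<gamma> = x} \<and>
        (\<Sum>j<n. \<Sum>\<beta>\<in>F. (cmod (\<xi> j \<beta>))\<^sup>2) \<le> 1 \<and>
        (\<Sum>k<n. \<Sum>\<gamma>\<in>F. (cmod (\<eta> k \<gamma>))\<^sup>2) \<le> 1}"

definition redNorm ::
  "'g set \<Rightarrow> 'g set \<Rightarrow> ('g \<Rightarrow> 'g) \<Rightarrow> ('g \<Rightarrow> 'g \<Rightarrow> 'g) \<Rightarrow> ('g \<Rightarrow> 'g) \<Rightarrow> ('g \<Rightarrow> complex) \<Rightarrow> ereal" where
  "redNorm Gr X d m i a = matNorm Gr X d m i 1 (\<lambda>_ _. a)"

definition Cc :: "'g set \<Rightarrow> ('g \<Rightarrow> complex) set" where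
  "Cc Gr = {f. finite {\<gamma>. f \<gamma> \<noteq> 0} \<and> {\<gamma>. f \<gamma> \<noteq> 0} \<subseteq> Gr}"

definition Crs ::
  "'g set \<Rightarrow> 'g set \<Rightarrow> ('g \<Rightarrow> 'g) \<Rightarrow> ('g \<Rightarrow> 'g \<Rightarrow> 'g) \<Rightarrow> ('g \<Rightarrow> 'g) \<Rightarrow> ('g \<Rightarrow> complex) set" where
  "Crs Gr X d m i = {a. (\<forall>\<gamma>. \<gamma> \<notin> Gr \<longrightarrow> a \<gamma> = 0) \<and>
      (\<exists>F::nat \<Rightarrow> 'g \<Rightarrow> complex. (\<forall>n. F n \<in> Cc Gr) \<and>
          ((\<lambda>n. redNorm Gr X d m i (\<lambda>\<gamma>. a \<gamma> - F n \<gamma>)) \<longlongrightarrow> 0) sequentially)}"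

definition C0X :: "'g set \<Rightarrow> ('g \<Rightarrow> complex) set" where
  "C0X X = {f. (\<forall>\<gamma>. \<gamma> \<notin> X \<longrightarrow> f \<gamma> = 0) \<and> (\<forall>e>0. finite {x\<in>X. cmod (f x) \<ge> e})}"

definition conv ::
  "'g set \<Rightarrow> ('g \<Rightarrow> 'g) \<Rightarrow> ('g \<Rightarrow> 'g \<Rightarrow> 'g) \<Rightarrow> ('g \<Rightarrow> 'g)
   \<Rightarrow> ('g \<Rightarrow> complex) \<Rightarrow> ('g \<Rightarrow> complex) \<Rightarrow> 'g \<Rightarrow> complex" where
  "conv Gr d m i f g \<gamma> = (if \<gamma> \<in> Gr then
      infsum (\<lambda>\<beta>. f (m \<gamma> (i \<beta>)) * g \<beta>) {\<beta>\<in>Gr. d \<beta> = d \<gamma>} else 0)"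

definition invol :: "'g set \<Rightarrow> ('g \<Rightarrow> 'g) \<Rightarrow> ('g \<Rightarrow> complex) \<Rightarrow> 'g \<Rightarrow> complex" where
  "invol Gr i f \<gamma> = (if \<gamma> \<in> Gr then cnj (f (i \<gamma>)) else 0)"

definition ract :: "('g \<Rightarrow> 'g) \<Rightarrow> ('g \<Rightarrow> complex) \<Rightarrow> ('g \<Rightarrow> complex) \<Rightarrow> 'g \<Rightarrow> complex" where
  "ract d f a \<gamma> = f \<gamma> * a (d \<gamma>)"

definition condexp :: "'g set \<Rightarrow> ('g \<Rightarrow> complex) \<Rightarrow> 'g \<Rightarrow> complex" where
  "condexp X f \<gamma> = (if \<gamma> \<in> X then f \<gamma> else 0)"

definition inner_C0 ::
  "'g set \<Rightarrow> 'g set \<Rightarrow> ('g \<Rightarrow> 'g) \<Rightarrow> ('g \<Rightarrow> 'g \<Rightarrow> 'g) \<Rightarrow> ('g \<Rightarrow> 'g)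
   \<Rightarrow> ('g \<Rightarrow> complex) \<Rightarrow> ('g \<Rightarrow> complex) \<Rightarrow> 'g \<Rightarrow> complex" where
  "inner_C0 Gr X d m i f g = condexp X (conv Gr d m i (invol Gr i f) g)"

definition ptmass :: "'g \<Rightarrow> 'g \<Rightarrow> complex" where
  "ptmass \<gamma> = (\<lambda>\<beta>. if \<beta> = \<gamma> then 1 else 0)"

definition opNorm ::
  "'g set \<Rightarrow> 'g set \<Rightarrow> ('g \<Rightarrow> 'g) \<Rightarrow> ('g \<Rightarrow> 'g \<Rightarrow> 'g) \<Rightarrow> ('g \<Rightarrow> 'g)
   \<Rightarrow> (('g \<Rightarrow> complex) \<Rightarrow> ('g \<Rightarrow> complex)) \<Rightarrow> ereal" where
  "opNorm Gr X d m i T = Sup {redNorm Gr X d m i (T a) | a.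
       a \<in> Crs Gr X d m i \<and> redNorm Gr X d m i a \<le> 1}"

definition cbNorm ::
  "'g set \<Rightarrow> 'g set \<Rightarrow> ('g \<Rightarrow> 'g) \<Rightarrow> ('g \<Rightarrow> 'g \<Rightarrow> 'g) \<Rightarrow> ('g \<Rightarrow> 'g)
   \<Rightarrow> (('g \<Rightarrow> complex) \<Rightarrow> ('g \<Rightarrow> complex)) \<Rightarrow> ereal" where
  "cbNorm Gr X d m i S = Sup {matNorm Gr X d m i n (\<lambda>k j. S (A k j)) | n A.
       n \<ge> 1 \<and> (\<forall>k<n. \<forall>j<n. A k j \<in> Crs Gr X d m i) \<and> matNorm Gr X d m i n A \<le> 1}"

definition M0A_norm ::
  "'g set \<Rightarrow> 'g set \<Rightarrow> ('g \<Rightarrow> 'g) \<Rightarrow> ('g \<Rightarrow> 'g \<Rightarrow> 'g) \<Rightarrow> ('g \<Rightarrow> 'g) \<Rightarrow> ('g \<Rightarrow> complex) \<Rightarrow> ereal" where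
  "M0A_norm Gr X d m i \<phi> = cbNorm Gr X d m i (\<lambda>a \<gamma>. \<phi> \<gamma> * a \<gamma>)"

definition phiT ::
  "'g set \<Rightarrow> 'g set \<Rightarrow> ('g \<Rightarrow> 'g) \<Rightarrow> ('g \<Rightarrow> 'g \<Rightarrow> 'g) \<Rightarrow> ('g \<Rightarrow> 'g)
   \<Rightarrow> (('g \<Rightarrow> complex) \<Rightarrow> ('g \<Rightarrow> complex)) \<Rightarrow> 'g \<Rightarrow> complex" where
  "phiT Gr X d m i T \<gamma> = (if \<gamma> \<in> Gr then
      condexp X (conv Gr d m i (ptmass (i \<gamma>)) (T (ptmass \<gamma>))) (d \<gamma>) else 0)"

end

theory Submission
  imports Defs
begin

locale dg =
  fixes Gr X :: "'g set" and d r i :: "'g \<Rightarrow> 'g" and m :: "'g \<Rightarrow> 'g \<Rightarrow> 'g"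
  assumes dg: "discrete_groupoid Gr X d r m i"
begin

lemma XG: "x \<in> X \<Longrightarrow> x \<in> Gr" using dg unfolding discrete_groupoid_def by blast
lemma dX[simp]: "a \<in> Gr \<Longrightarrow> d a \<in> X" using dg unfolding discrete_groupoid_def by blast
lemma rX[simp]: "a \<in> Gr \<Longrightarrow> r a \<in> X" using dg unfolding discrete_groupoid_def by blast
lemma dG[simp]: "a \<in> Gr \<Longrightarrow> d a \<in> Gr" using XG by simp
lemma rG[simp]: "a \<in> Gr \<Longrightarrow> r a \<in> Gr" using XG by simp
lemma dunit[simp]: "x \<in> X \<Longrightarrow> d x = x" using dg unfolding discrete_groupoid_def by blast
lemma runit[simp]: "x \<in> X \<Longrightarrow> r x = x" using dg unfolding discrete_groupoid_def by blast
lemma mG[simp]: "a \<in> Gr \<Longrightarrow> b \<in> Gr \<Longrightarrow> d a = r b \<Longrightarrow> m a b \<in> Gr"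
  using dg unfolding discrete_groupoid_def by blast
lemma dm[simp]: "a \<in> Gr \<Longrightarrow> b \<in> Gr \<Longrightarrow> d a = r b \<Longrightarrow> d (m a b) = d b"
  using dg unfolding discrete_groupoid_def by blast
lemma rm[simp]: "a \<in> Gr \<Longrightarrow> b \<in> Gr \<Longrightarrow> d a = r b \<Longrightarrow> r (m a b) = r a"
  using dg unfolding discrete_groupoid_def by blast
lemma assoc: "a \<in> Gr \<Longrightarrow> b \<in> Gr \<Longrightarrow> c \<in> Gr \<Longrightarrow> d a = r b \<Longrightarrow> d b = r c \<Longrightarrow> m (m a b) c = m a (m b c)"
  using dg unfolding discrete_groupoid_def by blast

lemma lunit[simp]: "a \<in> Gr \<Longrightarrow> m (r a) a = a" using dg unfolding discrete_groupoid_def by blast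
lemma runit_m[simp]: "a \<in> Gr \<Longrightarrow> m a (d a) = a" using dg unfolding discrete_groupoid_def by blast
lemma iG[simp]: "a \<in> Gr \<Longrightarrow> i a \<in> Gr" using dg unfolding discrete_groupoid_def by blast
lemma di[simp]: "a \<in> Gr \<Longrightarrow> d (i a) = r a" using dg unfolding discrete_groupoid_def by blast
lemma ri[simp]: "a \<in> Gr \<Longrightarrow> r (i a) = d a" using dg unfolding discrete_groupoid_def by blast
lemma mi[simp]: "a \<in> Gr \<Longrightarrow> m a (i a) = r a" using dg unfolding discrete_groupoid_def by blast
lemma im[simp]: "a \<in> Gr \<Longrightarrow> m (i a) a = d a" using dg unfolding discrete_groupoid_def by blast




lemma lcancel: assumes "a \<in> Gr" "b \<in> Gr" "c \<in> Gr" "d a = r b" "d a = r c" "m a b = m a c"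
  shows "b = c"
proof -
  have 1: "m (m (i a) a) b = m (i a) (m a b)" using assms by (intro assoc) auto
  have 2: "m (m (i a) a) c = m (i a) (m a c)" using assms by (intro assoc) auto
  have 3: "m (m (i a) a) b = b" using assms(1,2,4) by (metis im lunit)
  have 4: "m (m (i a) a) c = c" using assms(1,3,5) by (metis im lunit)
  show ?thesis using 1 2 3 4 assms(6) by simp
qed

lemma rcancel: assumes "a \<in> Gr" "b \<in> Gr" "c \<in> Gr" "d b = r a" "d c = r a" "m b a = m c a"
  shows "b = c"
proof -
  have 1: "m (m b a) (i a) = m b (m a (i a))" using assms by (intro assoc) auto
  have 2: "m (m c a) (i a) = m c (m a (i a))" using assms by (intro assoc) auto
  have 3: "m b (m a (i a)) = b" using assms(1,2,4) by (metis mi runit_m)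
  have 4: "m c (m a (i a)) = c" using assms(1,3,5) by (metis mi runit_m)
  have "b = m (m b a) (i a)" using 1 3 by simp
  also have "\<dots> = m (m c a) (i a)" using assms(6) by simp
  also have "\<dots> = c" using 2 4 by simp
  finally show ?thesis .
qed

lemma ii[simp]: assumes "a \<in> Gr" shows "i (i a) = a"
proof -
  have e: "m (i (i a)) (i a) = m a (i a)" using assms by (metis im mi iG di ri)
  show ?thesis using rcancel[OF _ _ _ _ _ e] assms by (metis im mi iG di ri)
qed

lemma iunit[simp]: assumes "x \<in> X" shows "i x = x"
proof -
  have g: "x \<in> Gr" using assms XG by blast
  have "m (i x) x = x" using g assms by simp
  moreover have "m x x = x" using g assms by (metis runit_m dunit)
  ultimately have e: "m (i x) x = m x x" by simp
  show ?thesis using rcancel[OF _ _ _ _ _ e] g assms by (metis di runit dunit iG)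
qed

lemma i_m: assumes "a \<in> Gr" "b \<in> Gr" "d a = r b" shows "i (m a b) = m (i b) (i a)"
proof -
  have 1: "m (m a b) (m (i b) (i a)) = m a (m b (m (i b) (i a)))" using assms by (intro assoc) auto
  have 2: "m b (m (i b) (i a)) = m (m b (i b)) (i a)" using assms by (intro assoc[symmetric]) auto
  have 3: "m (m b (i b)) (i a) = i a" using assms by (metis mi lunit iG ri)
  have 4: "m a (i a) = m (m a b) (i (m a b))" using assms by simp
  have e: "m (m a b) (m (i b) (i a)) = m (m a b) (i (m a b))" using 1 2 3 4 by simp
  show ?thesis by (rule sym, rule lcancel[OF _ _ _ _ _ e]) (use assms in auto)
qed

lemma cancel_l[simp]: assumes "a \<in> Gr" "b \<in> Gr" "r a = r b" shows "m a (m (i a) b) = b"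
proof -
  have "m a (m (i a) b) = m (m a (i a)) b" using assms by (intro assoc[symmetric]) auto
  thus ?thesis using assms by (metis mi lunit)
qed
lemma cancel_l2[simp]: assumes "a \<in> Gr" "b \<in> Gr" "d a = r b" shows "m (i a) (m a b) = b"
proof -
  have "m (i a) (m a b) = m (m (i a) a) b" using assms by (intro assoc[symmetric]) auto
  thus ?thesis using assms by (metis im lunit)
qed
lemma cancel_r[simp]: assumes "a \<in> Gr" "b \<in> Gr" "d a = d b" shows "m (m b (i a)) a = b"
proof -
  have "m (m b (i a)) a = m b (m (i a) a)" using assms by (intro assoc) auto
  thus ?thesis using assms by (metis im runit_m)
qed
lemma cancel_r2[simp]: assumes "a \<in> Gr" "b \<in> Gr" "d b = r a" shows "m (m b a) (i a) = b"
proof -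
  have "m (m b a) (i a) = m b (m a (i a))" using assms by (intro assoc) auto
  thus ?thesis using assms by (metis mi runit_m)
qed

end

lemma ab_le: "(a::real) * b \<le> (a\<^sup>2 + b\<^sup>2) / 2"
proof -
  have "2 * (a * b) \<le> a\<^sup>2 + b\<^sup>2" using sum_squares_bound[of a b] by (simp add: mult.assoc)
  thus ?thesis by simp
qed

lemma lt1: "{..<1::nat} = {0}" by auto
lemma lt1': "{..<Suc 0} = {0}" by auto

lemma pair_bound:
  fixes f :: "'a \<Rightarrow> complex" and g :: "'b \<Rightarrow> complex"
  assumes "finite F1" "finite F2" "P \<subseteq> F1 \<times> F2" "inj_on fst P" "inj_on snd P"
  shows "(\<Sum>p\<in>P. cmod (f (fst p)) * cmod (g (snd p)))
          \<le> ((\<Sum>a\<in>F1. (cmod (f a))\<^sup>2) + (\<Sum>b\<in>F2. (cmod (g b))\<^sup>2)) / 2"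
proof -
  have fP: "finite P" using assms(1,2,3) by (meson finite_SigmaI finite_subset)
  have "(\<Sum>p\<in>P. cmod (f (fst p)) * cmod (g (snd p)))
       \<le> (\<Sum>p\<in>P. ((cmod (f (fst p)))\<^sup>2 + (cmod (g (snd p)))\<^sup>2) / 2)"
    by (rule sum_mono) (rule ab_le)
  also have "\<dots> = ((\<Sum>p\<in>P. (cmod (f (fst p)))\<^sup>2) + (\<Sum>p\<in>P. (cmod (g (snd p)))\<^sup>2)) / 2"
    by (simp only: add_divide_distrib sum.distrib sum_divide_distrib)
  also have "(\<Sum>p\<in>P. (cmod (f (fst p)))\<^sup>2) = (\<Sum>a\<in>fst ` P. (cmod (f a))\<^sup>2)"
    by (simp add: sum.reindex[OF assms(4)])
  also have "\<dots> \<le> (\<Sum>a\<in>F1. (cmod (f a))\<^sup>2)"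
    by (rule sum_mono2) (use assms in auto)
  also have "(\<Sum>p\<in>P. (cmod (g (snd p)))\<^sup>2) = (\<Sum>b\<in>snd ` P. (cmod (g b))\<^sup>2)"
    by (simp add: sum.reindex[OF assms(5)])
  also have "\<dots> \<le> (\<Sum>b\<in>F2. (cmod (g b))\<^sup>2)"
    by (rule sum_mono2) (use assms in auto)
  finally show ?thesis by simp
qed

context dg begin

definition expr :: "'k set \<Rightarrow> ('k \<Rightarrow> 'k \<Rightarrow> 'g \<Rightarrow> complex) \<Rightarrow> 'g set \<Rightarrow> ('k \<Rightarrow> 'g \<Rightarrow> complex) \<Rightarrow> ('k \<Rightarrow> 'g \<Rightarrow> complex) \<Rightarrow> complex" where
  "expr I A F \<eta> \<xi> = (\<Sum>k\<in>I. \<Sum>j\<in>I. \<Sum>\<gamma>\<in>F. \<Sum>\<beta>\<in>F. cnj (\<eta> k \<gamma>) * A k j (m \<gamma> (i \<beta>)) * \<xi> j \<beta>)"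

definition nrm :: "'k set \<Rightarrow> 'g set \<Rightarrow> ('k \<Rightarrow> 'g \<Rightarrow> complex) \<Rightarrow> real" where
  "nrm I F \<eta> = (\<Sum>k\<in>I. \<Sum>\<gamma>\<in>F. (cmod (\<eta> k \<gamma>))\<^sup>2)"

lemma nrm_nonneg: "0 \<le> nrm I F \<eta>" unfolding nrm_def by (intro sum_nonneg) auto

lemma matNorm_eq: "matNorm Gr X d m i n A = Sup {ereal (cmod (expr {..<n} A F \<eta> \<xi>)) | x F \<xi> \<eta>.
    x \<in> X \<and> finite F \<and> F \<subseteq> {\<gamma>\<in>Gr. d \<gamma> = x} \<and> nrm {..<n} F \<xi> \<le> 1 \<and> nrm {..<n} F \<eta> \<le> 1}"
  by (simp add: matNorm_def expr_def nrm_def)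

lemma matNorm_ge:
  assumes "x \<in> X" "finite F" "F \<subseteq> {\<gamma>\<in>Gr. d \<gamma> = x}" "nrm {..<n} F \<xi> \<le> 1" "nrm {..<n} F \<eta> \<le> 1"
  shows "ereal (cmod (expr {..<n} A F \<eta> \<xi>)) \<le> matNorm Gr X d m i n A"
  unfolding matNorm_eq by (rule Sup_upper) (use assms in blast)

lemma matNorm_le:
  assumes "\<And>x F \<xi> \<eta>. x \<in> X \<Longrightarrow> finite F \<Longrightarrow> F \<subseteq> {\<gamma>\<in>Gr. d \<gamma> = x} \<Longrightarrow> nrm {..<n} F \<xi> \<le> 1
      \<Longrightarrow> nrm {..<n} F \<eta> \<le> 1 \<Longrightarrow> cmod (expr {..<n} A F \<eta> \<xi>) \<le> M"
  shows "matNorm Gr X d m i n A \<le> ereal M"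
  unfolding matNorm_eq by (rule Sup_least) (use assms in auto)

lemma matNorm_nonneg:
  assumes "X \<noteq> {}" shows "0 \<le> matNorm Gr X d m i n A"
proof -
  obtain x where x: "x \<in> X" using assms by blast
  have "ereal (cmod (expr {..<n} A {} (\<lambda>_ _. 0) (\<lambda>_ _. 0))) \<le> matNorm Gr X d m i n A"
    by (rule matNorm_ge[OF x]) (auto simp: nrm_def)
  thus ?thesis by (simp add: expr_def zero_ereal_def)
qed

lemma expr1: "expr {..<1::nat} (\<lambda>_ _. b) F \<eta> \<xi> = (\<Sum>\<gamma>\<in>F. \<Sum>\<beta>\<in>F. cnj (\<eta> 0 \<gamma>) * b (m \<gamma> (i \<beta>)) * \<xi> 0 \<beta>)"
  by (simp add: expr_def lt1)
lemma nrm1: "nrm {..<1::nat} F \<eta> = (\<Sum>\<gamma>\<in>F. (cmod (\<eta> 0 \<gamma>))\<^sup>2)"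
  by (simp add: nrm_def lt1)

lemma redNorm_l1:
  assumes "\<And>S. finite S \<Longrightarrow> S \<subseteq> Gr \<Longrightarrow> (\<Sum>s\<in>S. cmod (b s)) \<le> M"
  shows "redNorm Gr X d m i b \<le> ereal M"
proof -
  have "matNorm Gr X d m i 1 (\<lambda>_ _. b) \<le> ereal M"
  proof (rule matNorm_le)
    fix x F \<xi> \<eta> assume x: "x \<in> X" and fF: "finite F" and FG: "F \<subseteq> {\<gamma>\<in>Gr. d \<gamma> = x}"
      and n\<xi>: "nrm {..<1::nat} F \<xi> \<le> 1" and n\<eta>: "nrm {..<1::nat} F \<eta> \<le> 1"
    define f where "f = \<eta> 0"
    define g where "g = \<xi> 0"
    define q where "q = (\<lambda>p::'g\<times>'g. m (fst p) (i (snd p)))"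
    define S where "S = q ` (F \<times> F)"
    have fS: "finite S" using fF by (simp add: S_def)
    have "m a (i b) \<in> Gr" if "a \<in> F" "b \<in> F" for a b
    proof -
      have "a \<in> Gr" "b \<in> Gr" "d a = x" "d b = x" using that FG by auto
      thus ?thesis by simp
    qed
    hence SG: "S \<subseteq> Gr" by (auto simp: S_def q_def)
    have nf: "(\<Sum>a\<in>F. (cmod (f a))\<^sup>2) \<le> 1" using n\<eta> by (simp add: nrm_def lt1' f_def)
    have ng: "(\<Sum>a\<in>F. (cmod (g a))\<^sup>2) \<le> 1" using n\<xi> by (simp add: nrm_def lt1' g_def)
    have inner: "(\<Sum>p\<in>{p\<in>F\<times>F. q p = s}. cmod (f (fst p)) * cmod (g (snd p))) \<le> 1" for s
    proof -
      have i1: "inj_on fst {p\<in>F\<times>F. q p = s}"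
      proof (rule inj_onI)
        fix p1 p2 assume p1: "p1 \<in> {p\<in>F\<times>F. q p = s}" and p2: "p2 \<in> {p\<in>F\<times>F. q p = s}" and e: "fst p1 = fst p2"
        obtain a b1 b2 where pp: "p1 = (a, b1)" "p2 = (a, b2)" using e by (metis prod.collapse)
        have e: "m a (i b1) = m a (i b2)" using p1 p2 pp by (auto simp: q_def)
        have mem: "a \<in> Gr" "b1 \<in> Gr" "b2 \<in> Gr" "d a = x" "d b1 = x" "d b2 = x" using p1 p2 pp FG by auto
        have "i b1 = i b2" using lcancel[of a "i b1" "i b2"] e mem by simp
        hence "i (i b1) = i (i b2)" by simp
        hence "b1 = b2" using mem by (metis ii)
        thus "p1 = p2" using pp by simp
      qed
      have i2: "inj_on snd {p\<in>F\<times>F. q p = s}"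
      proof (rule inj_onI)
        fix p1 p2 assume p1: "p1 \<in> {p\<in>F\<times>F. q p = s}" and p2: "p2 \<in> {p\<in>F\<times>F. q p = s}" and e: "snd p1 = snd p2"
        obtain b a1 a2 where pp: "p1 = (a1, b)" "p2 = (a2, b)" using e by (metis prod.collapse)
        have e: "m a1 (i b) = m a2 (i b)" using p1 p2 pp by (auto simp: q_def)
        have mem: "a1 \<in> Gr" "a2 \<in> Gr" "b \<in> Gr" "d a1 = x" "d a2 = x" "d b = x" using p1 p2 pp FG by auto
        have "a1 = a2" using rcancel[of "i b" a1 a2] e mem by simp
        thus "p1 = p2" using pp by simp
      qed
      have "(\<Sum>p\<in>{p\<in>F\<times>F. q p = s}. cmod (f (fst p)) * cmod (g (snd p)))
          \<le> ((\<Sum>a\<in>F. (cmod (f a))\<^sup>2) + (\<Sum>b\<in>F. (cmod (g b))\<^sup>2)) / 2"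
        by (rule pair_bound[OF fF fF _ i1 i2]) auto
      also have "\<dots> \<le> 1" using nf ng by simp
      finally show ?thesis .
    qed
    have "cmod (expr {..<1::nat} (\<lambda>_ _. b) F \<eta> \<xi>) = cmod (\<Sum>p\<in>F\<times>F. cnj (f (fst p)) * b (q p) * g (snd p))"
      by (simp add: expr_def lt1' q_def f_def g_def, subst sum.cartesian_product, simp add: case_prod_beta)
    also have "\<dots> \<le> (\<Sum>p\<in>F\<times>F. cmod (b (q p)) * (cmod (f (fst p)) * cmod (g (snd p))))"
      by (rule order_trans[OF norm_sum]) (simp add: norm_mult mult_ac)
    also have "\<dots> = (\<Sum>s\<in>S. \<Sum>p\<in>{p\<in>F\<times>F. q p = s}. cmod (b (q p)) * (cmod (f (fst p)) * cmod (g (snd p))))"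
      by (rule sum.group[symmetric]) (auto simp: S_def fF)
    also have "\<dots> = (\<Sum>s\<in>S. cmod (b s) * (\<Sum>p\<in>{p\<in>F\<times>F. q p = s}. cmod (f (fst p)) * cmod (g (snd p))))"
      by (rule sum.cong[OF refl]) (simp add: sum_distrib_left)
    also have "\<dots> \<le> (\<Sum>s\<in>S. cmod (b s) * 1)"
      by (rule sum_mono, rule mult_left_mono) (use inner in auto)
    also have "\<dots> \<le> M" using assms fS SG by simp
    finally show "cmod (expr {..<1::nat} (\<lambda>_ _. b) F \<eta> \<xi>) \<le> M" .
  qed
  thus ?thesis by (simp add: redNorm_def)
qed

lemma redNorm_zero: assumes "X \<noteq> {}" shows "redNorm Gr X d m i (\<lambda>_. 0) = 0"
proof (rule antisym)
  show "redNorm Gr X d m i (\<lambda>_. 0) \<le> 0" using redNorm_l1[of "\<lambda>_. 0" 0] by (simp add: zero_ereal_def)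
  show "0 \<le> redNorm Gr X d m i (\<lambda>_. 0)" unfolding redNorm_def by (rule matNorm_nonneg[OF assms])
qed

lemma pt_le: assumes g: "\<gamma> \<in> Gr" shows "ereal (cmod (b \<gamma>)) \<le> redNorm Gr X d m i b"
proof -
  define x where "x = d \<gamma>"
  have x: "x \<in> X" using g by (simp add: x_def)
  define \<eta> where "\<eta> = (\<lambda>(k::nat) \<alpha>. if \<alpha> = \<gamma> then (1::complex) else 0)"
  define \<xi> where "\<xi> = (\<lambda>(k::nat) \<alpha>. if \<alpha> = x then (1::complex) else 0)"
  have F: "finite {\<gamma>, x}" "{\<gamma>, x} \<subseteq> {\<gamma>\<in>Gr. d \<gamma> = x}" using g x XG by (auto simp: x_def)
  have n1: "nrm {..<1::nat} {\<gamma>, x} \<eta> \<le> 1" by (cases "\<gamma> = x") (auto simp: nrm_def lt1 lt1' \<eta>_def)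
  have n2: "nrm {..<1::nat} {\<gamma>, x} \<xi> \<le> 1" by (cases "\<gamma> = x") (auto simp: nrm_def lt1 lt1' \<xi>_def)
  have e: "expr {..<1::nat} (\<lambda>_ _. b) {\<gamma>, x} \<eta> \<xi> = b (m \<gamma> (i x))"
    by (cases "\<gamma> = x") (auto simp: expr_def lt1 lt1' \<eta>_def \<xi>_def)
  have "m \<gamma> (i x) = \<gamma>" using g x by (simp add: x_def)
  hence "ereal (cmod (b \<gamma>)) = ereal (cmod (expr {..<1::nat} (\<lambda>_ _. b) {\<gamma>, x} \<eta> \<xi>))" using e by simp
  also have "\<dots> \<le> matNorm Gr X d m i 1 (\<lambda>_ _. b)" by (rule matNorm_ge[OF x F n2 n1])
  finally show ?thesis by (simp add: redNorm_def)
qed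

end

lemma infsum_single_pt:
  assumes "s \<in> A" shows "infsum (\<lambda>\<beta>. if \<beta> = s then (c::complex) else 0) A = c"
proof -
  have "infsum (\<lambda>\<beta>. if \<beta> = s then c else 0) A = infsum (\<lambda>\<beta>. if \<beta> = s then c else 0) {s}"
    by (rule infsum_cong_neutral) (use assms in auto)
  thus ?thesis by simp
qed

lemma fin_lemma:
  fixes h v :: "'a \<Rightarrow> nat \<Rightarrow> complex"
  assumes "\<forall>s\<in>A. finite {\<alpha>\<in>A. (\<Sum>j<k. h \<alpha> j * v s j) \<noteq> 0}"
  shows "finite {\<alpha>\<in>A. (\<Sum>j<k. h \<alpha> j * v \<alpha> j) \<noteq> 0}"
  using assms
proof (induction k arbitrary: A v)
  case 0
  then show ?case by simp
next
  case (Suc k)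
  show ?case
  proof (cases "\<forall>s\<in>A. v s k = 0")
    case True
    have eq: "(\<Sum>j<Suc k. h \<alpha> j * v s j) = (\<Sum>j<k. h \<alpha> j * v s j)" if "s \<in> A" for \<alpha> s
      using True that by simp
    have "\<forall>s\<in>A. finite {\<alpha>\<in>A. (\<Sum>j<k. h \<alpha> j * v s j) \<noteq> 0}"
    proof
      fix s assume s: "s \<in> A"
      have eqset: "{\<alpha>\<in>A. (\<Sum>j<k. h \<alpha> j * v s j) \<noteq> 0} = {\<alpha>\<in>A. (\<Sum>j<Suc k. h \<alpha> j * v s j) \<noteq> 0}"
        using True s by auto
      have fin: "finite {\<alpha>\<in>A. (\<Sum>j<Suc k. h \<alpha> j * v s j) \<noteq> 0}" using Suc.prems s by blast
      show "finite {\<alpha>\<in>A. (\<Sum>j<k. h \<alpha> j * v s j) \<noteq> 0}" using fin by (simp only: eqset)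
    qed
    hence "finite {\<alpha>\<in>A. (\<Sum>j<k. h \<alpha> j * v \<alpha> j) \<noteq> 0}" by (rule Suc.IH)
    moreover have "{\<alpha>\<in>A. (\<Sum>j<Suc k. h \<alpha> j * v \<alpha> j) \<noteq> 0} = {\<alpha>\<in>A. (\<Sum>j<k. h \<alpha> j * v \<alpha> j) \<noteq> 0}"
      using True by auto
    ultimately show ?thesis by simp
  next
    case False
    then obtain s0 where s0: "s0 \<in> A" "v s0 k \<noteq> 0" by blast
    define E0 where "E0 = {\<alpha>\<in>A. (\<Sum>j<Suc k. h \<alpha> j * v s0 j) \<noteq> 0}"
    have fE0: "finite E0" using Suc.prems s0 by (simp add: E0_def)
    define A' where "A' = A - E0"
    define v' where "v' = (\<lambda>s j. v s j - (v s k / v s0 k) * v s0 j)"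
    have v'k: "v' s k = 0" for s using s0 by (simp add: v'_def)
    have key: "(\<Sum>j<k. h \<alpha> j * v' s j) = (\<Sum>j<Suc k. h \<alpha> j * v s j)" if "\<alpha> \<in> A'" for \<alpha> s
    proof -
      have z: "(\<Sum>j<Suc k. h \<alpha> j * v s0 j) = 0" using that by (simp add: A'_def E0_def)
      have "(\<Sum>j<k. h \<alpha> j * v' s j) = (\<Sum>j<Suc k. h \<alpha> j * v' s j)" using v'k by simp
      also have "\<dots> = (\<Sum>j<Suc k. h \<alpha> j * v s j) - (v s k / v s0 k) * (\<Sum>j<Suc k. h \<alpha> j * v s0 j)"
        by (simp add: v'_def algebra_simps sum_subtractf sum_distrib_left)
      also have "\<dots> = (\<Sum>j<Suc k. h \<alpha> j * v s j)" using z by simp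
      finally show ?thesis .
    qed
    have "\<forall>s\<in>A'. finite {\<alpha>\<in>A'. (\<Sum>j<k. h \<alpha> j * v' s j) \<noteq> 0}"
    proof
      fix s assume s: "s \<in> A'"
      have "{\<alpha>\<in>A'. (\<Sum>j<k. h \<alpha> j * v' s j) \<noteq> 0} \<subseteq> {\<alpha>\<in>A. (\<Sum>j<Suc k. h \<alpha> j * v s j) \<noteq> 0}"
        using key by (auto simp: A'_def)
      moreover have "finite {\<alpha>\<in>A. (\<Sum>j<Suc k. h \<alpha> j * v s j) \<noteq> 0}" using Suc.prems s by (auto simp: A'_def)
      ultimately show "finite {\<alpha>\<in>A'. (\<Sum>j<k. h \<alpha> j * v' s j) \<noteq> 0}" by (rule finite_subset)
    qed
    hence f1: "finite {\<alpha>\<in>A'. (\<Sum>j<k. h \<alpha> j * v' \<alpha> j) \<noteq> 0}" by (rule Suc.IH)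
    have "{\<alpha>\<in>A. (\<Sum>j<Suc k. h \<alpha> j * v \<alpha> j) \<noteq> 0} \<subseteq> {\<alpha>\<in>A'. (\<Sum>j<k. h \<alpha> j * v' \<alpha> j) \<noteq> 0} \<union> E0"
      using key by (auto simp: A'_def)
    thus ?thesis using f1 fE0 by (meson finite_UnI finite_subset)
  qed
qed

lemma geom_bound:
  assumes "finite K" "\<forall>k\<in>K. N \<le> k"
  shows "(\<Sum>k\<in>K. (1/2::real)^k) \<le> 2 * (1/2)^N"
proof -
  have inj: "inj_on (\<lambda>k. k - N) K" by (rule inj_onI) (metis assms(2) le_add_diff_inverse)
  have "(\<Sum>k\<in>K. (1/2::real)^k) = (\<Sum>k\<in>K. (1/2)^N * (1/2)^(k - N))"
    by (rule sum.cong[OF refl]) (use assms(2) in \<open>simp add: power_add[symmetric]\<close>)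
  also have "\<dots> = (1/2)^N * (\<Sum>j\<in>(\<lambda>k. k - N) ` K. (1/2::real)^j)"
    by (simp add: sum_distrib_left sum.reindex[OF inj])
  also have "(\<Sum>j\<in>(\<lambda>k. k - N) ` K. (1/2::real)^j) \<le> (\<Sum>j. (1/2::real)^j)"
    by (rule sum_le_suminf) (use assms(1) in auto)
  also have "(\<Sum>j. (1/2::real)^j) = 2" using suminf_geometric[of "1/2::real"] by simp
  finally show ?thesis by (simp add: mult.commute)
qed

context dg begin

lemma ptmass_Cc: "\<gamma> \<in> Gr \<Longrightarrow> (\<lambda>\<alpha>. c * ptmass \<gamma> \<alpha>) \<in> Cc Gr"
  unfolding Cc_def ptmass_def by (auto intro: finite_subset[of _ "{\<gamma>}"])

lemma ptmass_Cc': "\<gamma> \<in> Gr \<Longrightarrow> ptmass \<gamma> \<in> Cc Gr"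
  using ptmass_Cc[of \<gamma> 1] by simp

lemma Cc_Crs: assumes "X \<noteq> {}" "a \<in> Cc Gr" shows "a \<in> Crs Gr X d m i"
proof -
  have 1: "\<forall>\<gamma>. \<gamma> \<notin> Gr \<longrightarrow> a \<gamma> = 0" using assms(2) by (auto simp: Cc_def)
  have 2: "((\<lambda>n. redNorm Gr X d m i (\<lambda>\<gamma>. a \<gamma> - a \<gamma>)) \<longlongrightarrow> 0) sequentially"
    using redNorm_zero[OF assms(1)] by simp
  show ?thesis unfolding Crs_def by (intro CollectI conjI exI[of _ "\<lambda>n. a"]) (use 1 2 assms(2) in auto)
qed

lemma ptmass_norm: assumes "\<gamma> \<in> Gr" shows "redNorm Gr X d m i (ptmass \<gamma>) \<le> 1"
proof -
  have "redNorm Gr X d m i (ptmass \<gamma>) \<le> ereal 1"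
  proof (rule redNorm_l1)
    fix S :: "'g set" assume "finite S"
    hence "(\<Sum>s\<in>S. cmod (ptmass \<gamma> s)) = (if \<gamma> \<in> S then 1 else 0)"
      by (simp add: ptmass_def if_distrib[of cmod] sum.delta' cong: if_cong)
    thus "(\<Sum>s\<in>S. cmod (ptmass \<gamma> s)) \<le> 1" by simp
  qed
  thus ?thesis by (simp add: one_ereal_def)
qed

lemma phiT_eq: assumes g: "\<gamma> \<in> Gr" shows "phiT Gr X d m i T \<gamma> = T (ptmass \<gamma>) \<gamma>"
proof -
  have x: "d \<gamma> \<in> X" "d \<gamma> \<in> Gr" using g by auto
  have "phiT Gr X d m i T \<gamma> = infsum (\<lambda>\<beta>. ptmass (i \<gamma>) (m (d \<gamma>) (i \<beta>)) * T (ptmass \<gamma>) \<beta>) {\<beta>\<in>Gr. d \<beta> = d \<gamma>}"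
    using g x by (simp add: phiT_def condexp_def conv_def)
  also have "\<dots> = infsum (\<lambda>\<beta>. if \<beta> = \<gamma> then T (ptmass \<gamma>) \<gamma> else 0) {\<beta>\<in>Gr. d \<beta> = d \<gamma>}"
  proof (rule infsum_cong)
    fix \<beta> assume b: "\<beta> \<in> {\<beta>\<in>Gr. d \<beta> = d \<gamma>}"
    have 1: "m (d \<gamma>) (i \<beta>) = i \<beta>" using b by (metis (mono_tags, lifting) iG lunit mem_Collect_eq ri)
    have 2: "(i \<beta> = i \<gamma>) = (\<beta> = \<gamma>)" using b g by (metis (mono_tags, lifting) ii mem_Collect_eq)
    show "ptmass (i \<gamma>) (m (d \<gamma>) (i \<beta>)) * T (ptmass \<gamma>) \<beta> = (if \<beta> = \<gamma> then T (ptmass \<gamma>) \<gamma> else 0)"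
      using 1 2 by (simp add: ptmass_def)
  qed
  also have "\<dots> = T (ptmass \<gamma>) \<gamma>" by (rule infsum_single_pt) (use g in auto)
  finally show ?thesis .
qed

lemma inner_single:
  assumes s: "s \<in> Gr" and z: "\<And>\<beta>. \<beta> \<in> Gr \<Longrightarrow> d \<beta> = d s \<Longrightarrow> \<beta> \<noteq> s \<Longrightarrow> a \<beta> = 0"
  shows "inner_C0 Gr X d m i g a (d s) = cnj (g s) * a s"
proof -
  have x: "d s \<in> X" "d s \<in> Gr" using s by auto
  have "inner_C0 Gr X d m i g a (d s) = infsum (\<lambda>\<beta>. invol Gr i g (m (d s) (i \<beta>)) * a \<beta>) {\<beta>\<in>Gr. d \<beta> = d s}"
    using x by (simp add: inner_C0_def condexp_def conv_def)
  also have "\<dots> = infsum (\<lambda>\<beta>. if \<beta> = s then cnj (g s) * a s else 0) {\<beta>\<in>Gr. d \<beta> = d s}"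
  proof (rule infsum_cong)
    fix \<beta> assume b: "\<beta> \<in> {\<beta>\<in>Gr. d \<beta> = d s}"
    have 1: "m (d s) (i \<beta>) = i \<beta>" using b by (metis (mono_tags, lifting) iG lunit mem_Collect_eq ri)
    have 2: "invol Gr i g (i s) = cnj (g s)" using s by (simp add: invol_def)
    show "invol Gr i g (m (d s) (i \<beta>)) * a \<beta> = (if \<beta> = s then cnj (g s) * a s else 0)"
      using 1 2 b z by auto
  qed
  also have "\<dots> = cnj (g s) * a s" by (rule infsum_single_pt) (use s in auto)
  finally show ?thesis .
qed

lemma inner_zero:
  assumes "\<And>\<beta>. \<beta> \<in> Gr \<Longrightarrow> d \<beta> = y \<Longrightarrow> a \<beta> = 0"
  shows "inner_C0 Gr X d m i g a y = 0"
proof (cases "y \<in> X")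
  case True
  hence "y \<in> Gr" "d y = y" using XG by auto
  thus ?thesis using True assms by (simp add: inner_C0_def condexp_def conv_def, intro infsum_0) auto
next
  case False thus ?thesis by (simp add: inner_C0_def condexp_def)
qed

lemma inner_pt:
  assumes s: "s \<in> Gr"
  shows "inner_C0 Gr X d m i g (ptmass s) y = (if y = d s then cnj (g s) else 0)"
proof (cases "y = d s")
  case True
  thus ?thesis using inner_single[OF s, of "ptmass s" g] by (simp add: ptmass_def)
next
  case False
  have "inner_C0 Gr X d m i g (ptmass s) y = 0" by (rule inner_zero) (use False in \<open>auto simp: ptmass_def\<close>)
  thus ?thesis using False by simp
qed

end

lemma sum_single:
  assumes "finite A" "a \<in> A" "\<And>x. x \<in> A \<Longrightarrow> x \<noteq> a \<Longrightarrow> f x = 0"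
  shows "sum f A = f a"
proof -
  have "sum f A = f a + sum f (A - {a})" using assms(1,2) by (rule sum.remove)
  also have "sum f (A - {a}) = 0" using assms(3) by (intro sum.neutral) auto
  finally show ?thesis by simp
qed

lemma divmod_bij:
  assumes "0 < c"
  shows "bij_betw (\<lambda>p::nat. (p div c, p mod c)) {..<n*c} ({..<n} \<times> {..<c})"
proof (rule bij_betwI')
  fix p q :: nat
  show "((p div c, p mod c) = (q div c, q mod c)) = (p = q)"
    by (metis div_mult_mod_eq prod.inject)
next
  fix p :: nat assume "p \<in> {..<n*c}"
  thus "(p div c, p mod c) \<in> {..<n} \<times> {..<c}"
    using assms by (auto intro: less_mult_imp_div_less)
next
  fix y assume y: "y \<in> {..<n} \<times> {..<c}"
  obtain k l where kl: "y = (k, l)" "k < n" "l < c" using y by auto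
  have "k * c + l < n * c"
  proof -
    have "k * c + l < k * c + c" using kl by simp
    also have "\<dots> = Suc k * c" by simp
    also have "\<dots> \<le> n * c" using kl by (intro mult_right_mono) auto
    finally show ?thesis .
  qed
  moreover have "y = ((k * c + l) div c, (k * c + l) mod c)" using kl assms by simp
  ultimately show "\<exists>x\<in>{..<n*c}. y = (x div c, x mod c)" by blast
qed

lemma sum_pairs:
  fixes c :: nat
  assumes e: "bij_betw e {..<c} F" and c: "0 < c"
  shows "(\<Sum>p<n*c. f (p div c) (e (p mod c))) = (\<Sum>k<n. \<Sum>\<gamma>\<in>F. f k \<gamma>)"
proof -
  have "(\<Sum>p<n*c. f (p div c) (e (p mod c))) = (\<Sum>q\<in>{..<n}\<times>{..<c}. f (fst q) (e (snd q)))"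
    using sum.reindex_bij_betw[OF divmod_bij[OF c, of n], of "\<lambda>q. f (fst q) (e (snd q))"] by simp
  also have "\<dots> = (\<Sum>k<n. \<Sum>l<c. f k (e l))"
    unfolding sum.cartesian_product by (simp add: case_prod_beta)
  also have "\<dots> = (\<Sum>k<n. \<Sum>\<gamma>\<in>F. f k \<gamma>)"
    by (rule sum.cong[OF refl], rule sum.reindex_bij_betw[OF e])
  finally show ?thesis .
qed

lemma sum5:
  "(\<Sum>k\<in>K. \<Sum>\<gamma>\<in>F. \<Sum>j\<in>K. \<Sum>\<beta>\<in>F. \<Sum>g\<in>G. f g k \<gamma> j \<beta>)
   = (\<Sum>g\<in>G. \<Sum>k\<in>K. \<Sum>j\<in>K. \<Sum>\<gamma>\<in>F. \<Sum>\<beta>\<in>F. f g k \<gamma> j \<beta>)"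
proof -
  have "(\<Sum>k\<in>K. \<Sum>\<gamma>\<in>F. \<Sum>j\<in>K. \<Sum>\<beta>\<in>F. \<Sum>g\<in>G. f g k \<gamma> j \<beta>)
      = (\<Sum>k\<in>K. \<Sum>\<gamma>\<in>F. \<Sum>j\<in>K. \<Sum>g\<in>G. \<Sum>\<beta>\<in>F. f g k \<gamma> j \<beta>)"
    by (simp only: sum.swap[of _ G F])
  also have "\<dots> = (\<Sum>k\<in>K. \<Sum>\<gamma>\<in>F. \<Sum>g\<in>G. \<Sum>j\<in>K. \<Sum>\<beta>\<in>F. f g k \<gamma> j \<beta>)"
    by (simp only: sum.swap[of _ G K])
  also have "\<dots> = (\<Sum>k\<in>K. \<Sum>g\<in>G. \<Sum>\<gamma>\<in>F. \<Sum>j\<in>K. \<Sum>\<beta>\<in>F. f g k \<gamma> j \<beta>)"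
    by (simp only: sum.swap[of _ G F])
  also have "\<dots> = (\<Sum>g\<in>G. \<Sum>k\<in>K. \<Sum>\<gamma>\<in>F. \<Sum>j\<in>K. \<Sum>\<beta>\<in>F. f g k \<gamma> j \<beta>)"
    by (simp only: sum.swap[of _ G K])
  also have "\<dots> = (\<Sum>g\<in>G. \<Sum>k\<in>K. \<Sum>j\<in>K. \<Sum>\<gamma>\<in>F. \<Sum>\<beta>\<in>F. f g k \<gamma> j \<beta>)"
    by (simp only: sum.swap[of _ K F])
  finally show ?thesis .
qed

context dg begin

lemma gA: assumes "a \<in> Gr" "b \<in> Gr" "g \<in> Gr" "d a = r g" "d b = r g"
  shows "m (m a g) (i (m b g)) = m a (i b)"
proof -
  have "i (m b g) = m (i g) (i b)" using assms by (simp add: i_m)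
  hence "m (m a g) (i (m b g)) = m (m a g) (m (i g) (i b))" by simp
  also have "\<dots> = m a (m g (m (i g) (i b)))" using assms by (intro assoc) auto
  also have "m g (m (i g) (i b)) = m (m g (i g)) (i b)" using assms by (intro assoc[symmetric]) auto
  also have "m (m g (i g)) (i b) = i b" using assms by (metis mi iG ri lunit)
  finally show ?thesis .
qed

lemma gB: assumes "\<alpha> \<in> Gr" "\<alpha>' \<in> Gr" "\<gamma> \<in> Gr" "\<beta> \<in> Gr" "d \<alpha> = d \<alpha>'" "d \<gamma> = d \<beta>"
  "m \<alpha> (i \<alpha>') = m \<gamma> (i \<beta>)"
  shows "m \<beta> (m (i \<gamma>) \<alpha>) = \<alpha>'" and "r \<alpha> = r \<gamma>"
proof -
  have rr: "r (m \<alpha> (i \<alpha>')) = r \<alpha>" using assms(1-6) by simp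
  have rr2: "r (m \<gamma> (i \<beta>)) = r \<gamma>" using assms(1-6) by simp
  show "r \<alpha> = r \<gamma>" by (metis rr rr2 assms(7))
  have dd: "d (m \<alpha> (i \<alpha>')) = r \<alpha>'" using assms(1-6) by simp
  have dd2: "d (m \<gamma> (i \<beta>)) = r \<beta>" using assms(1-6) by simp
  have rb: "r \<alpha>' = r \<beta>" by (metis dd dd2 assms(7))
  have "\<alpha> = m (m \<alpha> (i \<alpha>')) \<alpha>'" using assms(1-6) by simp
  also have "\<dots> = m (m \<gamma> (i \<beta>)) \<alpha>'" using assms(7) by simp
  also have "\<dots> = m \<gamma> (m (i \<beta>) \<alpha>')" using assms rb by (intro assoc) auto
  finally have a1: "\<alpha> = m \<gamma> (m (i \<beta>) \<alpha>')" .
  have "m (i \<gamma>) \<alpha> = m (i \<beta>) \<alpha>'" using a1 assms rb by simp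
  thus "m \<beta> (m (i \<gamma>) \<alpha>) = \<alpha>'" using assms rb by simp
qed

lemma matNorm_bound:
  assumes A1: "matNorm Gr X d m i n A \<le> 1" and x: "x \<in> X" and fF: "finite F"
    and FG: "F \<subseteq> {\<gamma>\<in>Gr. d \<gamma> = x}"
  shows "cmod (expr {..<n} A F u v) \<le> (nrm {..<n} F u + nrm {..<n} F v) / 2"
proof (rule field_le_epsilon)
  fix \<delta> :: real assume \<delta>: "0 < \<delta>"
  let ?I = "{..<n}"
  have gen: "cmod (expr ?I A F u' v') \<le> 1" if "nrm ?I F u' \<le> 1" "nrm ?I F v' \<le> 1" for u' v'
  proof -
    have "ereal (cmod (expr ?I A F u' v')) \<le> matNorm Gr X d m i n A"
      by (rule matNorm_ge[OF x fF FG that(2) that(1)])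
    also have "\<dots> \<le> 1" by (rule A1)
    finally show ?thesis by (simp add: one_ereal_def)
  qed
  have homo: "expr ?I A F (\<lambda>k \<gamma>. of_real s * u k \<gamma>) (\<lambda>k \<gamma>. of_real t * v k \<gamma>) = of_real (s * t) * expr ?I A F u v" for s t :: real
    by (simp add: expr_def sum_distrib_left mult_ac)
  have nsc: "nrm ?I F (\<lambda>k \<gamma>. of_real s * w k \<gamma>) = s\<^sup>2 * nrm ?I F w" for s :: real and w
    by (simp add: nrm_def norm_mult power_mult_distrib sum_distrib_left)
  define a where "a = sqrt (nrm ?I F u + \<delta>)"
  define b where "b = sqrt (nrm ?I F v + \<delta>)"
  have nu: "0 \<le> nrm ?I F u" "0 \<le> nrm ?I F v" by (rule nrm_nonneg)+
  have a: "0 < a" "a\<^sup>2 = nrm ?I F u + \<delta>" using nu \<delta> by (auto simp: a_def)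
  have b: "0 < b" "b\<^sup>2 = nrm ?I F v + \<delta>" using nu \<delta> by (auto simp: b_def)
  have "nrm ?I F (\<lambda>k \<gamma>. of_real (1/a) * u k \<gamma>) \<le> 1"
    unfolding nsc using a nu \<delta> by (simp add: power_divide field_simps)
  moreover have "nrm ?I F (\<lambda>k \<gamma>. of_real (1/b) * v k \<gamma>) \<le> 1"
    unfolding nsc using b nu \<delta> by (simp add: power_divide field_simps)
  ultimately have "cmod (expr ?I A F (\<lambda>k \<gamma>. of_real (1/a) * u k \<gamma>) (\<lambda>k \<gamma>. of_real (1/b) * v k \<gamma>)) \<le> 1"
    by (rule gen)
  hence h1: "cmod (of_real (1/a * (1/b)) * expr ?I A F u v) \<le> 1" by (simp only: homo)
  have "cmod (of_real (1/a * (1/b)) * expr ?I A F u v) = (1/a * (1/b)) * cmod (expr ?I A F u v)"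
    using a b by (simp add: norm_mult norm_divide abs_of_pos)
  hence h2: "(1/a * (1/b)) * cmod (expr ?I A F u v) \<le> 1" using h1 by simp
  have "cmod (expr ?I A F u v) = (a * b) * ((1/a * (1/b)) * cmod (expr ?I A F u v))" using a b by simp
  also have "\<dots> \<le> (a * b) * 1" using h2 a b by (intro mult_left_mono) auto
  finally have "cmod (expr ?I A F u v) \<le> a * b" by simp
  also have "a * b \<le> (a\<^sup>2 + b\<^sup>2) / 2" by (rule ab_le)
  also have "\<dots> = (nrm ?I F u + nrm ?I F v) / 2 + \<delta>" using a b by simp
  finally show "cmod (expr ?I A F u v) \<le> (nrm ?I F u + nrm ?I F v) / 2 + \<delta>" .
qed

lemma pair_to_g:
  assumes x: "x \<in> X" and y: "y \<in> X" and FG: "F \<subseteq> {\<gamma>\<in>Gr. d \<gamma> = x}" and fF': "finite F'"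
    and F'G: "F' \<subseteq> {\<gamma>\<in>Gr. d \<gamma> = y}" and fGs: "finite Gs"
    and Gs: "Gs = {g\<in>Gr. r g = x \<and> d g = y \<and> (\<exists>\<gamma>\<in>F. m \<gamma> g \<in> F')}"
    and g: "\<gamma> \<in> F" and b: "\<beta> \<in> F"
  shows "(\<Sum>\<alpha>\<in>F'. \<Sum>\<alpha>'\<in>F'. if m \<alpha> (i \<alpha>') = m \<gamma> (i \<beta>) then Y \<alpha> \<alpha>' else 0)
       = (\<Sum>g\<in>Gs. if m \<gamma> g \<in> F' \<and> m \<beta> g \<in> F' then Y (m \<gamma> g) (m \<beta> g) else (0::complex))"
proof -
  have gG: "\<gamma> \<in> Gr" "d \<gamma> = x" "\<beta> \<in> Gr" "d \<beta> = x" using g b FG by auto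
  define Pr where "Pr = {p\<in>F'\<times>F'. m (fst p) (i (snd p)) = m \<gamma> (i \<beta>)}"
  define Gs' where "Gs' = {g\<in>Gs. m \<gamma> g \<in> F' \<and> m \<beta> g \<in> F'}"
  have "(\<Sum>\<alpha>\<in>F'. \<Sum>\<alpha>'\<in>F'. if m \<alpha> (i \<alpha>') = m \<gamma> (i \<beta>) then Y \<alpha> \<alpha>' else 0)
      = (\<Sum>p\<in>F'\<times>F'. if m (fst p) (i (snd p)) = m \<gamma> (i \<beta>) then Y (fst p) (snd p) else 0)"
    by (subst sum.cartesian_product) (simp add: case_prod_beta)
  also have "\<dots> = (\<Sum>p\<in>Pr. Y (fst p) (snd p))"
    unfolding Pr_def using fF' by (simp add: sum.inter_filter)
  finally have c1: "(\<Sum>\<alpha>\<in>F'. \<Sum>\<alpha>'\<in>F'. if m \<alpha> (i \<alpha>') = m \<gamma> (i \<beta>) then Y \<alpha> \<alpha>' else 0) = (\<Sum>p\<in>Pr. Y (fst p) (snd p))" .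
  have bij: "bij_betw (\<lambda>g. (m \<gamma> g, m \<beta> g)) Gs' Pr"
    proof (rule bij_betwI')
      fix g1 g2 assume g1: "g1 \<in> Gs'" and g2: "g2 \<in> Gs'"
      have m1: "g1 \<in> Gr" "r g1 = x" "g2 \<in> Gr" "r g2 = x" using g1 g2 by (auto simp: Gs'_def Gs)
      show "((m \<gamma> g1, m \<beta> g1) = (m \<gamma> g2, m \<beta> g2)) = (g1 = g2)"
      proof
        assume "(m \<gamma> g1, m \<beta> g1) = (m \<gamma> g2, m \<beta> g2)"
        hence "m \<gamma> g1 = m \<gamma> g2" by simp
        thus "g1 = g2" using lcancel[of \<gamma> g1 g2] m1 gG by simp
      qed simp
    next
      fix g1 assume g1: "g1 \<in> Gs'"
      have m1: "g1 \<in> Gr" "r g1 = x" "m \<gamma> g1 \<in> F'" "m \<beta> g1 \<in> F'" using g1 by (auto simp: Gs'_def Gs)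
      have "m (m \<gamma> g1) (i (m \<beta> g1)) = m \<gamma> (i \<beta>)" using gA[of \<gamma> \<beta> g1] m1 gG by simp
      thus "(m \<gamma> g1, m \<beta> g1) \<in> Pr" using m1 by (simp add: Pr_def)
    next
      fix p assume p: "p \<in> Pr"
      obtain \<alpha> \<alpha>' where pp: "p = (\<alpha>, \<alpha>')" by (cases p)
      have m1: "\<alpha> \<in> Gr" "d \<alpha> = y" "\<alpha>' \<in> Gr" "d \<alpha>' = y" "\<alpha> \<in> F'" "\<alpha>' \<in> F'"
        "m \<alpha> (i \<alpha>') = m \<gamma> (i \<beta>)"
        using p pp F'G by (auto simp: Pr_def)
      have e1: "m \<beta> (m (i \<gamma>) \<alpha>) = \<alpha>'" and e2: "r \<alpha> = r \<gamma>"
        using gB[of \<alpha> \<alpha>' \<gamma> \<beta>] m1 gG by auto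
      define g0 where "g0 = m (i \<gamma>) \<alpha>"
      have g0: "g0 \<in> Gr" "r g0 = x" "d g0 = y" "m \<gamma> g0 = \<alpha>" using m1 gG e2 by (auto simp: g0_def)
      have "m \<gamma> g0 \<in> F'" "m \<beta> g0 \<in> F'" using g0 m1 e1 by (auto simp: g0_def)
      hence "g0 \<in> Gs'" using g0 g unfolding Gs'_def Gs by blast
      moreover have "p = (m \<gamma> g0, m \<beta> g0)" using pp g0 e1 by (simp add: g0_def)
      ultimately show "\<exists>g\<in>Gs'. p = (m \<gamma> g, m \<beta> g)" by blast
    qed
  have c2: "(\<Sum>p\<in>Pr. Y (fst p) (snd p)) = (\<Sum>g\<in>Gs'. Y (m \<gamma> g) (m \<beta> g))"
    using sum.reindex_bij_betw[OF bij, of "\<lambda>p. Y (fst p) (snd p)"] by simp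
  have c3: "(\<Sum>g\<in>Gs'. Y (m \<gamma> g) (m \<beta> g)) = (\<Sum>g\<in>Gs. if m \<gamma> g \<in> F' \<and> m \<beta> g \<in> F' then Y (m \<gamma> g) (m \<beta> g) else 0)"
    unfolding Gs'_def using fGs by (simp add: sum.inter_filter)
  show ?thesis using c1 c2 c3 by simp
qed

end

context dg begin

lemma B_bound:
  fixes c :: nat
  assumes A1: "matNorm Gr X d m i n A \<le> 1" and x: "x \<in> X" and fF: "finite F"
    and FG: "F \<subseteq> {\<gamma>\<in>Gr. d \<gamma> = x}" and c: "0 < c" and e: "bij_betw e {..<c} F"
  shows "matNorm Gr X d m i (n*c) (\<lambda>p q \<alpha>. A (p div c) (q div c) (m (e (p mod c)) (i (e (q mod c))))
            * ptmass (m (e (p mod c)) (i (e (q mod c)))) \<alpha>) \<le> 1"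
proof -
  define B where "B = (\<lambda>p q \<alpha>. A (p div c) (q div c) (m (e (p mod c)) (i (e (q mod c))))
            * ptmass (m (e (p mod c)) (i (e (q mod c)))) \<alpha>)"
  define idx where "idx = (\<lambda>k \<gamma>. k * c + inv_into {..<c} e \<gamma>)"
  have idx_inv: "idx (p div c) (e (p mod c)) = p" for p
  proof -
    have "p mod c \<in> {..<c}" using c by simp
    hence "inv_into {..<c} e (e (p mod c)) = p mod c" using bij_betw_inv_into_left[OF e] by blast
    thus ?thesis by (simp add: idx_def)
  qed
  have "matNorm Gr X d m i (n*c) B \<le> ereal 1"
  proof (rule matNorm_le)
    fix y F' \<xi>' \<eta>' assume y: "y \<in> X" and fF': "finite F'" and F'G: "F' \<subseteq> {\<gamma>\<in>Gr. d \<gamma> = y}"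
      and n\<xi>: "nrm {..<n*c} F' \<xi>' \<le> 1" and n\<eta>: "nrm {..<n*c} F' \<eta>' \<le> 1"
    define \<eta>2 where "\<eta>2 = (\<lambda>k \<gamma>. \<eta>' (idx k \<gamma>))"
    define \<xi>2 where "\<xi>2 = (\<lambda>k \<gamma>. \<xi>' (idx k \<gamma>))"
    define Gs where "Gs = {g\<in>Gr. r g = x \<and> d g = y \<and> (\<exists>\<gamma>\<in>F. m \<gamma> g \<in> F')}"
    have fGs: "finite Gs"
    proof -
      have "Gs \<subseteq> (\<lambda>p. m (i (fst p)) (snd p)) ` (F \<times> F')"
      proof
        fix g assume g: "g \<in> Gs"
        then obtain \<gamma> where \<gamma>: "\<gamma> \<in> F" "m \<gamma> g \<in> F'" "g \<in> Gr" "r g = x" by (auto simp: Gs_def)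
        have "\<gamma> \<in> Gr" "d \<gamma> = x" using \<gamma> FG by auto
        hence "m (i \<gamma>) (m \<gamma> g) = g" using \<gamma> by simp
        thus "g \<in> (\<lambda>p. m (i (fst p)) (snd p)) ` (F \<times> F')" using \<gamma> by force
      qed
      thus ?thesis using fF fF' by (meson finite_SigmaI finite_imageI finite_subset)
    qed
    define u where "u = (\<lambda>g k \<gamma>. if m \<gamma> g \<in> F' then \<eta>2 k \<gamma> (m \<gamma> g) else 0)"
    define v where "v = (\<lambda>g k \<gamma>. if m \<gamma> g \<in> F' then \<xi>2 k \<gamma> (m \<gamma> g) else 0)"
    define Y where "Y = (\<lambda>k \<gamma> j \<beta> \<alpha> \<alpha>'. cnj (\<eta>2 k \<gamma> \<alpha>) * A k j (m \<gamma> (i \<beta>)) * \<xi>2 j \<beta> \<alpha>')"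
    define W where "W = (\<lambda>k \<gamma> j \<beta>. \<Sum>\<alpha>\<in>F'. \<Sum>\<alpha>'\<in>F'. if m \<alpha> (i \<alpha>') = m \<gamma> (i \<beta>) then Y k \<gamma> j \<beta> \<alpha> \<alpha>' else 0)"
    define Z where "Z = (\<lambda>g k \<gamma> j \<beta>. cnj (u g k \<gamma>) * A k j (m \<gamma> (i \<beta>)) * v g j \<beta>)"
    have s1: "expr {..<n*c} B F' \<eta>' \<xi>' = (\<Sum>p<n*c. \<Sum>q<n*c. W (p div c) (e (p mod c)) (q div c) (e (q mod c)))"
      unfolding expr_def W_def by (intro sum.cong refl) (simp add: Y_def \<eta>2_def \<xi>2_def idx_inv ptmass_def B_def)
    have s2: "(\<Sum>q<n*c. W k0 \<gamma>0 (q div c) (e (q mod c))) = (\<Sum>j<n. \<Sum>\<beta>\<in>F. W k0 \<gamma>0 j \<beta>)" for k0 \<gamma>0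
      by (rule sum_pairs[OF e c, where n=n and f="W k0 \<gamma>0"])
    have s3: "(\<Sum>p<n*c. \<Sum>j<n. \<Sum>\<beta>\<in>F. W (p div c) (e (p mod c)) j \<beta>) = (\<Sum>k<n. \<Sum>\<gamma>\<in>F. \<Sum>j<n. \<Sum>\<beta>\<in>F. W k \<gamma> j \<beta>)"
      using sum_pairs[OF e c, where n=n and f="\<lambda>k \<gamma>. \<Sum>j<n. \<Sum>\<beta>\<in>F. W k \<gamma> j \<beta>"] by simp
    have s4: "W k \<gamma> j \<beta> = (\<Sum>g\<in>Gs. Z g k \<gamma> j \<beta>)" if "\<gamma> \<in> F" "\<beta> \<in> F" for k \<gamma> j \<beta>
    proof -
      have "W k \<gamma> j \<beta> = (\<Sum>g\<in>Gs. if m \<gamma> g \<in> F' \<and> m \<beta> g \<in> F' then Y k \<gamma> j \<beta> (m \<gamma> g) (m \<beta> g) else 0)"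
        unfolding W_def by (rule pair_to_g[OF x y FG fF' F'G fGs Gs_def that])
      also have "\<dots> = (\<Sum>g\<in>Gs. Z g k \<gamma> j \<beta>)"
        by (rule sum.cong[OF refl]) (auto simp: Z_def u_def v_def Y_def)
      finally show ?thesis .
    qed
    have eqE: "expr {..<n*c} B F' \<eta>' \<xi>' = (\<Sum>g\<in>Gs. expr {..<n} A F (u g) (v g))"
    proof -
      have "expr {..<n*c} B F' \<eta>' \<xi>' = (\<Sum>k<n. \<Sum>\<gamma>\<in>F. \<Sum>j<n. \<Sum>\<beta>\<in>F. W k \<gamma> j \<beta>)"
        unfolding s1 s2 s3 ..
      also have "\<dots> = (\<Sum>k<n. \<Sum>\<gamma>\<in>F. \<Sum>j<n. \<Sum>\<beta>\<in>F. \<Sum>g\<in>Gs. Z g k \<gamma> j \<beta>)"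
        by (intro sum.cong refl) (simp add: s4)
      also have "\<dots> = (\<Sum>g\<in>Gs. \<Sum>k<n. \<Sum>j<n. \<Sum>\<gamma>\<in>F. \<Sum>\<beta>\<in>F. Z g k \<gamma> j \<beta>)"
        by (rule sum5)
      also have "\<dots> = (\<Sum>g\<in>Gs. expr {..<n} A F (u g) (v g))"
        by (simp add: expr_def Z_def)
      finally show ?thesis .
    qed
    have nb: "(\<Sum>g\<in>Gs. nrm {..<n} F (u g)) \<le> nrm {..<n*c} F' \<eta>'"
         "(\<Sum>g\<in>Gs. nrm {..<n} F (v g)) \<le> nrm {..<n*c} F' \<xi>'"
    proof -
      have gen: "(\<Sum>g\<in>Gs. nrm {..<n} F (\<lambda>k \<gamma>. if m \<gamma> g \<in> F' then w2 k \<gamma> (m \<gamma> g) else 0))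
                 \<le> nrm {..<n*c} F' w" if w2: "w2 = (\<lambda>k \<gamma>. w (idx k \<gamma>))" for w w2
      proof -
        have "(\<Sum>g\<in>Gs. nrm {..<n} F (\<lambda>k \<gamma>. if m \<gamma> g \<in> F' then w2 k \<gamma> (m \<gamma> g) else 0))
            = (\<Sum>k<n. \<Sum>\<gamma>\<in>F. \<Sum>g\<in>Gs. (cmod (if m \<gamma> g \<in> F' then w2 k \<gamma> (m \<gamma> g) else 0))\<^sup>2)"
          unfolding nrm_def by (simp only: sum.swap[of _ "{..<n}" Gs] sum.swap[of _ F Gs])
        also have "\<dots> \<le> (\<Sum>k<n. \<Sum>\<gamma>\<in>F. \<Sum>\<alpha>\<in>F'. (cmod (w2 k \<gamma> \<alpha>))\<^sup>2)"
        proof (intro sum_mono)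
          fix k \<gamma> assume \<gamma>: "\<gamma> \<in> F"
          have gG: "\<gamma> \<in> Gr" "d \<gamma> = x" using \<gamma> FG by auto
          let ?G = "{g\<in>Gs. m \<gamma> g \<in> F'}"
          have inj: "inj_on (m \<gamma>) ?G"
          proof (rule inj_onI)
            fix g1 g2 assume "g1 \<in> ?G" "g2 \<in> ?G" "m \<gamma> g1 = m \<gamma> g2"
            thus "g1 = g2" using lcancel[of \<gamma> g1 g2] gG by (simp add: Gs_def)
          qed
          have "(\<Sum>g\<in>Gs. (cmod (if m \<gamma> g \<in> F' then w2 k \<gamma> (m \<gamma> g) else 0))\<^sup>2)
              = (\<Sum>g\<in>?G. (cmod (w2 k \<gamma> (m \<gamma> g)))\<^sup>2)"
            using fGs by (simp add: sum.inter_filter if_distrib[of cmod] if_distrib[of "\<lambda>x. x\<^sup>2"] cong: if_cong)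
          also have "\<dots> = (\<Sum>\<alpha>\<in>m \<gamma> ` ?G. (cmod (w2 k \<gamma> \<alpha>))\<^sup>2)"
            by (simp add: sum.reindex[OF inj])
          also have "\<dots> \<le> (\<Sum>\<alpha>\<in>F'. (cmod (w2 k \<gamma> \<alpha>))\<^sup>2)"
            by (rule sum_mono2[OF fF']) auto
          finally show "(\<Sum>g\<in>Gs. (cmod (if m \<gamma> g \<in> F' then w2 k \<gamma> (m \<gamma> g) else 0))\<^sup>2)
              \<le> (\<Sum>\<alpha>\<in>F'. (cmod (w2 k \<gamma> \<alpha>))\<^sup>2)" .
        qed
        also have "\<dots> = (\<Sum>p<n*c. \<Sum>\<alpha>\<in>F'. (cmod (w p \<alpha>))\<^sup>2)"
          using sum_pairs[OF e c, where n=n and f="\<lambda>k \<gamma>. \<Sum>\<alpha>\<in>F'. (cmod (w2 k \<gamma> \<alpha>))\<^sup>2"] by (simp add: w2 idx_inv)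
        also have "\<dots> = nrm {..<n*c} F' w" by (simp add: nrm_def)
        finally show ?thesis .
      qed
      show "(\<Sum>g\<in>Gs. nrm {..<n} F (u g)) \<le> nrm {..<n*c} F' \<eta>'"
        unfolding u_def by (rule gen) (simp add: \<eta>2_def)
      show "(\<Sum>g\<in>Gs. nrm {..<n} F (v g)) \<le> nrm {..<n*c} F' \<xi>'"
        unfolding v_def by (rule gen) (simp add: \<xi>2_def)
    qed
    have "cmod (expr {..<n*c} B F' \<eta>' \<xi>') \<le> (\<Sum>g\<in>Gs. cmod (expr {..<n} A F (u g) (v g)))"
      unfolding eqE by (rule norm_sum)
    also have "\<dots> \<le> (\<Sum>g\<in>Gs. (nrm {..<n} F (u g) + nrm {..<n} F (v g)) / 2)"
      by (rule sum_mono) (rule matNorm_bound[OF A1 x fF FG])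
    also have "\<dots> = ((\<Sum>g\<in>Gs. nrm {..<n} F (u g)) + (\<Sum>g\<in>Gs. nrm {..<n} F (v g))) / 2"
      by (simp only: add_divide_distrib sum.distrib sum_divide_distrib)
    also have "\<dots> \<le> 1" using nb n\<xi> n\<eta> by simp
    finally show "cmod (expr {..<n*c} B F' \<eta>' \<xi>') \<le> 1" .
  qed
  thus ?thesis by (simp add: B_def one_ereal_def)
qed

end

context dg begin

lemma countable_Gr: "countable Gr" using dg unfolding discrete_groupoid_def by blast

lemma finsupp:
  fixes hs gs :: "nat \<Rightarrow> 'g \<Rightarrow> complex" and k :: nat
  assumes Tf: "\<forall>a\<in>Crs Gr X d m i. T a = (\<lambda>\<gamma>. \<Sum>j<k. ract d (hs j) (inner_C0 Gr X d m i (gs j) a) \<gamma>)"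
    and Tc: "\<forall>a\<in>Crs Gr X d m i. T a \<in> Cc Gr"
  shows "phiT Gr X d m i T \<in> Cc Gr"
proof -
  let ?\<phi> = "phiT Gr X d m i T"
  have pc: "ptmass s \<in> Crs Gr X d m i" if "s \<in> Gr" for s
  proof -
    have "X \<noteq> {}" using that dX by blast
    thus ?thesis using Cc_Crs ptmass_Cc'[OF that] by blast
  qed
  have Tpt: "T (ptmass s) \<alpha> = (\<Sum>j<k. hs j \<alpha> * (if d \<alpha> = d s then cnj (gs j s) else 0))" if s: "s \<in> Gr" for s \<alpha>
    using Tf pc[OF s] by (simp add: ract_def inner_pt[OF s])
  have phi: "?\<phi> s = (\<Sum>j<k. hs j s * cnj (gs j s))" if "s \<in> Gr" for s
    using phiT_eq[OF that] Tpt[OF that, of s] by simp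
  define S where "S = {s\<in>Gr. ?\<phi> s \<noteq> 0}"
  have supp: "{\<gamma>. ?\<phi> \<gamma> \<noteq> 0} = S" by (auto simp: S_def phiT_def)
  have "finite S"
  proof (rule ccontr)
    assume inf: "infinite S"
    show False
    proof (cases "\<exists>x\<in>X. infinite {s\<in>S. d s = x}")
      case True
      then obtain x where x: "x \<in> X" and infx: "infinite {s\<in>S. d s = x}" by blast
      let ?A = "{\<gamma>\<in>Gr. d \<gamma> = x}"
      have f2: "finite {\<alpha>\<in>?A. (\<Sum>j<k. hs j \<alpha> * cnj (gs j \<alpha>)) \<noteq> 0}"
      proof (rule fin_lemma[where h="\<lambda>\<alpha> j. hs j \<alpha>" and v="\<lambda>s j. cnj (gs j s)"], intro ballI)
        fix s assume s: "s \<in> ?A"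
        have "{\<alpha>\<in>?A. (\<Sum>j<k. hs j \<alpha> * cnj (gs j s)) \<noteq> 0} \<subseteq> {\<alpha>. T (ptmass s) \<alpha> \<noteq> 0}"
          using Tpt s by auto
        moreover have "finite {\<alpha>. T (ptmass s) \<alpha> \<noteq> 0}" using Tc pc s by (auto simp: Cc_def)
        ultimately show "finite {\<alpha>\<in>?A. (\<Sum>j<k. hs j \<alpha> * cnj (gs j s)) \<noteq> 0}" by (rule finite_subset)
      qed
      have "{s\<in>S. d s = x} \<subseteq> {\<alpha>\<in>?A. (\<Sum>j<k. hs j \<alpha> * cnj (gs j \<alpha>)) \<noteq> 0}" using phi by (auto simp: S_def)
      thus False using infx f2 finite_subset by blast
    next
      case False
      hence finx: "\<forall>x\<in>X. finite {s\<in>S. d s = x}" by blast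
      define U where "U = d ` S"
      have UX: "U \<subseteq> X" by (auto simp: U_def S_def)
      have infU: "infinite U"
      proof
        assume fU: "finite U"
        have "S \<subseteq> (\<Union>x\<in>U. {s\<in>S. d s = x})" by (auto simp: U_def)
        moreover have "finite (\<Union>x\<in>U. {s\<in>S. d s = x})" using fU finx UX by auto
        ultimately show False using inf finite_subset by blast
      qed
      have Xne: "X \<noteq> {}" using infU UX by auto
      have "U \<subseteq> Gr" using UX XG by blast
      hence cU: "countable U" using countable_Gr by (rule countable_subset)
      define idx where "idx = to_nat_on U"
      have inj_idx: "inj_on idx U" using cU by (simp add: idx_def inj_on_to_nat_on)
      define sel where "sel = (\<lambda>x. SOME s. s \<in> S \<and> d s = x)"
      have sel: "sel x \<in> S \<and> d (sel x) = x" if "x \<in> U" for x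
      proof -
        have "\<exists>s. s \<in> S \<and> d s = x" using that by (auto simp: U_def)
        thus ?thesis unfolding sel_def by (rule someI_ex)
      qed
      define a where "a = (\<lambda>\<gamma>. if \<gamma> \<in> Gr \<and> d \<gamma> \<in> U \<and> \<gamma> = sel (d \<gamma>) then complex_of_real ((1/2)^(idx (d \<gamma>))) else 0)"
      define Fn where "Fn = (\<lambda>N \<gamma>. if idx (d \<gamma>) < N then a \<gamma> else 0)"
      have Fn_Cc: "Fn N \<in> Cc Gr" for N
      proof -
        have "idx ` {x\<in>U. idx x < N} \<subseteq> {..<N}" by auto
        hence "finite (idx ` {x\<in>U. idx x < N})" by (rule finite_subset) simp
        moreover have "inj_on idx {x\<in>U. idx x < N}" using inj_idx by (rule inj_on_subset) auto
        ultimately have fin: "finite {x\<in>U. idx x < N}" by (rule finite_imageD)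
        have sub: "{\<gamma>. Fn N \<gamma> \<noteq> 0} \<subseteq> sel ` {x\<in>U. idx x < N}"
        proof
          fix \<gamma> assume "\<gamma> \<in> {\<gamma>. Fn N \<gamma> \<noteq> 0}"
          hence "\<gamma> \<in> Gr" "d \<gamma> \<in> U" "\<gamma> = sel (d \<gamma>)" "idx (d \<gamma>) < N"
            by (auto simp: Fn_def a_def split: if_splits)
          thus "\<gamma> \<in> sel ` {x\<in>U. idx x < N}" by blast
        qed
        have g: "{\<gamma>. Fn N \<gamma> \<noteq> 0} \<subseteq> Gr" by (auto simp: Fn_def a_def split: if_splits)
        have "finite {\<gamma>. Fn N \<gamma> \<noteq> 0}" using finite_subset[OF sub finite_imageI[OF fin]] .
        thus ?thesis using g unfolding Cc_def by blast
      qed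
      have tail: "redNorm Gr X d m i (\<lambda>\<gamma>. a \<gamma> - Fn N \<gamma>) \<le> ereal (2 * (1/2)^N)" for N
      proof (rule redNorm_l1)
        fix S' assume fS': "finite S'" and S'G: "S' \<subseteq> Gr"
        define P where "P = (\<lambda>\<gamma>. \<gamma> \<in> Gr \<and> d \<gamma> \<in> U \<and> \<gamma> = sel (d \<gamma>) \<and> \<not> idx (d \<gamma>) < N)"
        have inj2: "inj_on (\<lambda>s. idx (d s)) {s\<in>S'. P s}"
        proof (rule inj_onI)
          fix s1 s2 assume s1: "s1 \<in> {s\<in>S'. P s}" and s2: "s2 \<in> {s\<in>S'. P s}" and e: "idx (d s1) = idx (d s2)"
          have "d s1 = d s2" using inj_idx e s1 s2 by (auto simp: P_def dest: inj_onD)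
          thus "s1 = s2" using s1 s2 by (auto simp: P_def)
        qed
        have "(\<Sum>s\<in>S'. cmod (a s - Fn N s)) = (\<Sum>s\<in>S'. if P s then (1/2)^(idx (d s)) else 0)"
          by (rule sum.cong[OF refl]) (auto simp: P_def a_def Fn_def norm_power norm_divide)
        also have "\<dots> = (\<Sum>s\<in>{s\<in>S'. P s}. (1/2)^(idx (d s)))" using fS' by (simp add: sum.inter_filter)
        also have "\<dots> = (\<Sum>k\<in>(\<lambda>s. idx (d s)) ` {s\<in>S'. P s}. (1/2::real)^k)"
          by (simp add: sum.reindex[OF inj2])
        also have "\<dots> \<le> 2 * (1/2)^N" by (rule geom_bound) (use fS' in \<open>auto simp: P_def\<close>)
        finally show "(\<Sum>s\<in>S'. cmod (a s - Fn N s)) \<le> 2 * (1/2)^N" .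
      qed
      have aCrs: "a \<in> Crs Gr X d m i"
      proof -
        have z: "\<forall>\<gamma>. \<gamma> \<notin> Gr \<longrightarrow> a \<gamma> = 0" by (simp add: a_def)
        have r0: "(\<lambda>N. 2 * (1/2::real)^N) \<longlonglongrightarrow> 0"
          by (intro tendsto_mult_right_zero LIMSEQ_power_zero) simp
        have r1: "(\<lambda>N. ereal (2 * (1/2::real)^N)) \<longlonglongrightarrow> 0"
          using tendsto_ereal[OF r0] by (simp add: zero_ereal_def)
        have lim: "(\<lambda>N. redNorm Gr X d m i (\<lambda>\<gamma>. a \<gamma> - Fn N \<gamma>)) \<longlonglongrightarrow> 0"
        proof (rule tendsto_sandwich[OF _ _ tendsto_const r1])
          show "\<forall>\<^sub>F N in sequentially. 0 \<le> redNorm Gr X d m i (\<lambda>\<gamma>. a \<gamma> - Fn N \<gamma>)"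
            unfolding redNorm_def using matNorm_nonneg[OF Xne] by simp
          show "\<forall>\<^sub>F N in sequentially. redNorm Gr X d m i (\<lambda>\<gamma>. a \<gamma> - Fn N \<gamma>) \<le> ereal (2 * (1/2)^N)"
            using tail by simp
        qed
        show ?thesis unfolding Crs_def
          by (intro CollectI conjI exI[of _ Fn]) (use z lim Fn_Cc in auto)
      qed
      have TaC: "T a \<in> Cc Gr" using Tc aCrs by blast
      have nz: "T a (sel x) \<noteq> 0" if x: "x \<in> U" for x
      proof -
        have s: "sel x \<in> S" "d (sel x) = x" using sel[OF x] by auto
        have sG: "sel x \<in> Gr" using s by (simp add: S_def)
        have inn: "inner_C0 Gr X d m i (gs j) a x = cnj (gs j (sel x)) * a (sel x)" for j
        proof -
          have "inner_C0 Gr X d m i (gs j) a (d (sel x)) = cnj (gs j (sel x)) * a (sel x)"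
            by (rule inner_single[OF sG]) (auto simp: a_def s)
          thus ?thesis using s by simp
        qed
        have as: "a (sel x) = complex_of_real ((1/2)^(idx x))" using sG s x by (simp add: a_def)
        have "T a (sel x) = (\<Sum>j<k. hs j (sel x) * (cnj (gs j (sel x)) * a (sel x)))"
          using Tf aCrs inn s by (simp add: ract_def)
        also have "\<dots> = a (sel x) * ?\<phi> (sel x)" by (simp add: phi[OF sG] sum_distrib_left mult_ac)
        finally have "T a (sel x) = a (sel x) * ?\<phi> (sel x)" .
        moreover have "?\<phi> (sel x) \<noteq> 0" using s by (simp add: S_def)
        moreover have "a (sel x) \<noteq> 0" using as by simp
        ultimately show ?thesis by simp
      qed
      have "inj_on sel U" by (rule inj_onI) (metis sel)
      hence "infinite (sel ` U)" using infU finite_imageD by blast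
      moreover have su: "sel ` U \<subseteq> {\<gamma>. T a \<gamma> \<noteq> 0}" using nz by auto
      moreover have "finite {\<gamma>. T a \<gamma> \<noteq> 0}" using TaC by (simp add: Cc_def)
      ultimately show False using finite_subset[OF su] by blast
    qed
  qed
  moreover have "S \<subseteq> Gr" by (auto simp: S_def)
  ultimately show ?thesis unfolding Cc_def using supp by simp
qed

end

context dg begin

lemma cbNorm_nonneg: assumes "X \<noteq> {}" shows "0 \<le> cbNorm Gr X d m i T"
proof -
  have z: "(\<lambda>_. 0) \<in> Crs Gr X d m i" by (rule Cc_Crs[OF assms]) (simp add: Cc_def)
  have z0: "matNorm Gr X d m i 1 (\<lambda>_ _. (\<lambda>_. 0)) = 0" using redNorm_zero[OF assms] by (simp add: redNorm_def)
  have "matNorm Gr X d m i 1 (\<lambda>k j. T ((\<lambda>_ _. (\<lambda>_. 0)) k j)) \<le> cbNorm Gr X d m i T"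
    unfolding cbNorm_def
    by (rule Sup_upper, rule CollectI, rule exI[of _ 1], rule exI[of _ "\<lambda>_ _. (\<lambda>_. 0)"]) (use z z0 in auto)
  moreover have "0 \<le> matNorm Gr X d m i 1 (\<lambda>k j. T ((\<lambda>_ _. (\<lambda>_. 0)) k j))" by (rule matNorm_nonneg[OF assms])
  ultimately show ?thesis by simp
qed

lemma cb_elem:
  assumes homog: "\<forall>c::complex. \<forall>a\<in>Crs Gr X d m i. T (\<lambda>\<gamma>. c * a \<gamma>) = (\<lambda>\<gamma>. c * T a \<gamma>)"
    and n1: "1 \<le> n" and A1: "matNorm Gr X d m i n A \<le> 1"
    and x: "x \<in> X" and fF: "finite F" and FG: "F \<subseteq> {\<gamma>\<in>Gr. d \<gamma> = x}"
    and n\<xi>: "nrm {..<n} F \<xi> \<le> 1" and n\<eta>: "nrm {..<n} F \<eta> \<le> 1"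
  shows "ereal (cmod (expr {..<n} (\<lambda>k j \<gamma>. phiT Gr X d m i T \<gamma> * A k j \<gamma>) F \<eta> \<xi>)) \<le> cbNorm Gr X d m i T"
proof (cases "F = {}")
  case True
  have "X \<noteq> {}" using x by blast
  thus ?thesis using True cbNorm_nonneg by (simp add: expr_def zero_ereal_def)
next
  case False
  let ?\<phi> = "phiT Gr X d m i T"
  have Xne: "X \<noteq> {}" using x by blast
  define c where "c = card F"
  have c: "0 < c" using False fF by (simp add: c_def card_gt_0_iff)
  obtain e where e: "bij_betw e {..<c} F"
    using ex_bij_betw_nat_finite[OF fF] by (auto simp: c_def atLeast0LessThan)
  have eF: "e l \<in> F" if "l < c" for l using bij_betwE[OF e] that by auto
  define s where "s = (\<lambda>p q. m (e (p mod c)) (i (e (q mod c))))"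
  define B where "B = (\<lambda>p q \<alpha>. A (p div c) (q div c) (s p q) * ptmass (s p q) \<alpha>)"
  have sG: "s p q \<in> Gr" for p q
  proof -
    have "e (p mod c) \<in> F" "e (q mod c) \<in> F" using eF c by auto
    hence "e (p mod c) \<in> Gr" "e (q mod c) \<in> Gr" "d (e (p mod c)) = x" "d (e (q mod c)) = x" using FG by auto
    thus ?thesis by (simp add: s_def)
  qed
  have BC: "B p q \<in> Crs Gr X d m i" for p q
    unfolding B_def by (rule Cc_Crs[OF Xne ptmass_Cc[OF sG]])
  have Bn: "matNorm Gr X d m i (n*c) B \<le> 1"
    unfolding B_def s_def by (rule B_bound[OF A1 x fF FG c e])
  have N1: "1 \<le> n * c" using n1 c by (simp add: Suc_le_eq)
  have TB: "matNorm Gr X d m i (n*c) (\<lambda>p q. T (B p q)) \<le> cbNorm Gr X d m i T"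
    unfolding cbNorm_def
    by (rule Sup_upper, rule CollectI, rule exI[of _ "n*c"], rule exI[of _ B]) (use BC Bn N1 in auto)
  define \<eta>' where "\<eta>' = (\<lambda>p \<alpha>. if \<alpha> = e (p mod c) then \<eta> (p div c) \<alpha> else 0)"
  define \<xi>' where "\<xi>' = (\<lambda>p \<alpha>. if \<alpha> = e (p mod c) then \<xi> (p div c) \<alpha> else 0)"
  have nrm_eq: "nrm {..<n*c} F (\<lambda>p \<alpha>. if \<alpha> = e (p mod c) then w (p div c) \<alpha> else 0) = nrm {..<n} F w" for w
  proof -
    have "nrm {..<n*c} F (\<lambda>p \<alpha>. if \<alpha> = e (p mod c) then w (p div c) \<alpha> else 0)
        = (\<Sum>p<n*c. (cmod (w (p div c) (e (p mod c))))\<^sup>2)"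
      unfolding nrm_def
      by (rule sum.cong[OF refl], subst sum_single[OF fF eF, of "p mod c" for p]) (auto simp: c)
    also have "\<dots> = nrm {..<n} F w"
      using sum_pairs[OF e c, where n=n and f="\<lambda>k \<gamma>. (cmod (w k \<gamma>))\<^sup>2"] by (simp add: nrm_def)
    finally show ?thesis .
  qed
  have n\<xi>': "nrm {..<n*c} F \<xi>' \<le> 1" using n\<xi> nrm_eq[of \<xi>] by (simp add: \<xi>'_def)
  have n\<eta>': "nrm {..<n*c} F \<eta>' \<le> 1" using n\<eta> nrm_eq[of \<eta>] by (simp add: \<eta>'_def)
  define G where "G = (\<lambda>k \<gamma> j \<beta>. cnj (\<eta> k \<gamma>) * (A k j (m \<gamma> (i \<beta>)) * ?\<phi> (m \<gamma> (i \<beta>))) * \<xi> j \<beta>)"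
  have TBs: "T (B p q) (s p q) = A (p div c) (q div c) (s p q) * ?\<phi> (s p q)" for p q
  proof -
    have "T (B p q) = (\<lambda>\<alpha>. A (p div c) (q div c) (s p q) * T (ptmass (s p q)) \<alpha>)"
      unfolding B_def using homog Cc_Crs[OF Xne ptmass_Cc'[OF sG]] by blast
    thus ?thesis using phiT_eq[OF sG] by simp
  qed
  have inner: "(\<Sum>\<alpha>\<in>F. \<Sum>\<alpha>'\<in>F. cnj (\<eta>' p \<alpha>) * T (B p q) (m \<alpha> (i \<alpha>')) * \<xi>' q \<alpha>')
      = G (p div c) (e (p mod c)) (q div c) (e (q mod c))" for p q
  proof -
    have ep: "e (p mod c) \<in> F" "e (q mod c) \<in> F" using eF c by auto
    have "(\<Sum>\<alpha>\<in>F. \<Sum>\<alpha>'\<in>F. cnj (\<eta>' p \<alpha>) * T (B p q) (m \<alpha> (i \<alpha>')) * \<xi>' q \<alpha>')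
        = (\<Sum>\<alpha>'\<in>F. cnj (\<eta>' p (e (p mod c))) * T (B p q) (m (e (p mod c)) (i \<alpha>')) * \<xi>' q \<alpha>')"
      by (rule sum_single[OF fF ep(1)]) (simp add: \<eta>'_def)
    also have "\<dots> = cnj (\<eta>' p (e (p mod c))) * T (B p q) (m (e (p mod c)) (i (e (q mod c)))) * \<xi>' q (e (q mod c))"
      by (rule sum_single[OF fF ep(2)]) (simp add: \<xi>'_def)
    also have "\<dots> = G (p div c) (e (p mod c)) (q div c) (e (q mod c))"
      using TBs[of p q] by (simp add: G_def \<eta>'_def \<xi>'_def s_def)
    finally show ?thesis .
  qed
  have "expr {..<n*c} (\<lambda>p q. T (B p q)) F \<eta>' \<xi>' = (\<Sum>p<n*c. \<Sum>q<n*c. G (p div c) (e (p mod c)) (q div c) (e (q mod c)))"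
    unfolding expr_def by (simp only: inner)
  also have "\<dots> = (\<Sum>p<n*c. \<Sum>j<n. \<Sum>\<beta>\<in>F. G (p div c) (e (p mod c)) j \<beta>)"
    by (rule sum.cong[OF refl]) (rule sum_pairs[OF e c])
  also have "\<dots> = (\<Sum>k<n. \<Sum>\<gamma>\<in>F. \<Sum>j<n. \<Sum>\<beta>\<in>F. G k \<gamma> j \<beta>)"
    using sum_pairs[OF e c, where n=n and f="\<lambda>k \<gamma>. \<Sum>j<n. \<Sum>\<beta>\<in>F. G k \<gamma> j \<beta>"] by simp
  also have "\<dots> = (\<Sum>k<n. \<Sum>j<n. \<Sum>\<gamma>\<in>F. \<Sum>\<beta>\<in>F. G k \<gamma> j \<beta>)"
    by (simp only: sum.swap[of _ "{..<n}" F])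
  also have "\<dots> = expr {..<n} (\<lambda>k j \<gamma>. ?\<phi> \<gamma> * A k j \<gamma>) F \<eta> \<xi>"
    by (simp add: expr_def G_def mult_ac)
  finally have eq: "expr {..<n*c} (\<lambda>p q. T (B p q)) F \<eta>' \<xi>' = expr {..<n} (\<lambda>k j \<gamma>. ?\<phi> \<gamma> * A k j \<gamma>) F \<eta> \<xi>" .
  have "ereal (cmod (expr {..<n*c} (\<lambda>p q. T (B p q)) F \<eta>' \<xi>')) \<le> matNorm Gr X d m i (n*c) (\<lambda>p q. T (B p q))"
    by (rule matNorm_ge[OF x fF FG n\<xi>' n\<eta>'])
  thus ?thesis using eq TB by simp
qed

lemma cb_part:
  assumes homog: "\<forall>c::complex. \<forall>a\<in>Crs Gr X d m i. T (\<lambda>\<gamma>. c * a \<gamma>) = (\<lambda>\<gamma>. c * T a \<gamma>)"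
  shows "M0A_norm Gr X d m i (phiT Gr X d m i T) \<le> cbNorm Gr X d m i T"
proof -
  let ?\<phi> = "phiT Gr X d m i T"
  have "cbNorm Gr X d m i (\<lambda>a \<gamma>. ?\<phi> \<gamma> * a \<gamma>) \<le> cbNorm Gr X d m i T"
    unfolding cbNorm_def[of Gr X d m i "\<lambda>a \<gamma>. ?\<phi> \<gamma> * a \<gamma>"]
  proof (rule Sup_least)
    fix z assume "z \<in> {matNorm Gr X d m i n (\<lambda>k j. (\<lambda>a \<gamma>. ?\<phi> \<gamma> * a \<gamma>) (A k j)) | n A.
       n \<ge> 1 \<and> (\<forall>k<n. \<forall>j<n. A k j \<in> Crs Gr X d m i) \<and> matNorm Gr X d m i n A \<le> 1}"
    then obtain n A where z: "z = matNorm Gr X d m i n (\<lambda>k j \<gamma>. ?\<phi> \<gamma> * A k j \<gamma>)"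
      and n1: "1 \<le> n" and A1: "matNorm Gr X d m i n A \<le> 1" by auto
    show "z \<le> cbNorm Gr X d m i T"
      unfolding z matNorm_eq
    proof (rule Sup_least)
      fix w assume "w \<in> {ereal (cmod (expr {..<n} (\<lambda>k j \<gamma>. ?\<phi> \<gamma> * A k j \<gamma>) F \<eta> \<xi>)) | x F \<xi> \<eta>.
          x \<in> X \<and> finite F \<and> F \<subseteq> {\<gamma>\<in>Gr. d \<gamma> = x} \<and> nrm {..<n} F \<xi> \<le> 1 \<and> nrm {..<n} F \<eta> \<le> 1}"
      then obtain x F \<xi> \<eta> where w: "w = ereal (cmod (expr {..<n} (\<lambda>k j \<gamma>. ?\<phi> \<gamma> * A k j \<gamma>) F \<eta> \<xi>))"
        and x: "x \<in> X" "finite F" "F \<subseteq> {\<gamma>\<in>Gr. d \<gamma> = x}" "nrm {..<n} F \<xi> \<le> 1" "nrm {..<n} F \<eta> \<le> 1"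
        by blast
      show "w \<le> cbNorm Gr X d m i T" unfolding w by (rule cb_elem[OF homog n1 A1 x])
    qed
  qed
  thus ?thesis by (simp add: M0A_norm_def)
qed

end

theorem mainTheorem5:
  fixes Gr X :: "'g set" and d r i :: "'g \<Rightarrow> 'g" and m :: "'g \<Rightarrow> 'g \<Rightarrow> 'g"
    and T :: "('g \<Rightarrow> complex) \<Rightarrow> ('g \<Rightarrow> complex)"
  assumes grp: "discrete_groupoid Gr X d r m i"
    and maps: "\<forall>a\<in>Crs Gr X d m i. T a \<in> Crs Gr X d m i"
    and additive: "\<forall>a\<in>Crs Gr X d m i. \<forall>b\<in>Crs Gr X d m i. T (\<lambda>\<gamma>. a \<gamma> + b \<gamma>) = (\<lambda>\<gamma>. T a \<gamma> + T b \<gamma>)"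
    and homog: "\<forall>c::complex. \<forall>a\<in>Crs Gr X d m i. T (\<lambda>\<gamma>. c * a \<gamma>) = (\<lambda>\<gamma>. c * T a \<gamma>)"
    and C0lin: "\<forall>a\<in>Crs Gr X d m i. \<forall>f\<in>C0X X. T (ract d a f) = ract d (T a) f"
    and bdd: "opNorm Gr X d m i T < \<infinity>"
  shows "(\<forall>\<gamma>\<in>Gr. ereal (cmod (phiT Gr X d m i T \<gamma>)) \<le> opNorm Gr X d m i T)
       \<and> ((\<exists>k::nat. \<exists>hs gs :: nat \<Rightarrow> 'g \<Rightarrow> complex.
               (\<forall>j<k. hs j \<in> Crs Gr X d m i \<and> gs j \<in> Crs Gr X d m i) \<and>
               (\<forall>a\<in>Crs Gr X d m i. T a = (\<lambda>\<gamma>. \<Sum>j<k. ract d (hs j) (inner_C0 Gr X d m i (gs j) a) \<gamma>)))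
          \<and> (\<forall>a\<in>Crs Gr X d m i. T a \<in> Cc Gr)
          \<longrightarrow> phiT Gr X d m i T \<in> Cc Gr
              \<and> M0A_norm Gr X d m i (phiT Gr X d m i T) \<le> cbNorm Gr X d m i T)"
proof -
  interpret dg Gr X d r i m by (rule dg.intro[OF grp])
  have part1: "\<forall>\<gamma>\<in>Gr. ereal (cmod (phiT Gr X d m i T \<gamma>)) \<le> opNorm Gr X d m i T"
  proof
    fix \<gamma> assume g: "\<gamma> \<in> Gr"
    have Xne: "X \<noteq> {}" using g dX by blast
    have pc: "ptmass \<gamma> \<in> Crs Gr X d m i" by (rule Cc_Crs[OF Xne ptmass_Cc'[OF g]])
    have "ereal (cmod (phiT Gr X d m i T \<gamma>)) = ereal (cmod (T (ptmass \<gamma>) \<gamma>))" by (simp add: phiT_eq[OF g])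
    also have "\<dots> \<le> redNorm Gr X d m i (T (ptmass \<gamma>))" by (rule pt_le[OF g])
    also have "\<dots> \<le> opNorm Gr X d m i T"
      unfolding opNorm_def
      by (rule Sup_upper, rule CollectI, rule exI[of _ "ptmass \<gamma>"]) (use pc ptmass_norm[OF g] in auto)
    finally show "ereal (cmod (phiT Gr X d m i T \<gamma>)) \<le> opNorm Gr X d m i T" .
  qed
  have part2: "phiT Gr X d m i T \<in> Cc Gr \<and> M0A_norm Gr X d m i (phiT Gr X d m i T) \<le> cbNorm Gr X d m i T"
    if H: "(\<exists>k::nat. \<exists>hs gs :: nat \<Rightarrow> 'g \<Rightarrow> complex.
               (\<forall>j<k. hs j \<in> Crs Gr X d m i \<and> gs j \<in> Crs Gr X d m i) \<and>
               (\<forall>a\<in>Crs Gr X d m i. T a = (\<lambda>\<gamma>. \<Sum>j<k. ract d (hs j) (inner_C0 Gr X d m i (gs j) a) \<gamma>)))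
          \<and> (\<forall>a\<in>Crs Gr X d m i. T a \<in> Cc Gr)"
  proof
    obtain k :: nat and hs gs :: "nat \<Rightarrow> 'g \<Rightarrow> complex" where
      Tf: "\<forall>a\<in>Crs Gr X d m i. T a = (\<lambda>\<gamma>. \<Sum>j<k. ract d (hs j) (inner_C0 Gr X d m i (gs j) a) \<gamma>)"
      using H by blast
    have Tc: "\<forall>a\<in>Crs Gr X d m i. T a \<in> Cc Gr" using H by blast
    show "phiT Gr X d m i T \<in> Cc Gr" by (rule finsupp[OF Tf Tc])
    show "M0A_norm Gr X d m i (phiT Gr X d m i T) \<le> cbNorm Gr X d m i T" by (rule cb_part[OF homog])
  qed
  show ?thesis using part1 part2 by blast
qed

end
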